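(* Let $p\ge5$ be a prime with $\left(\frac{-2}{p}\right)=-1$. Then for all integers $k,m\ge0$ with $p\nmid m$, $$b^{4}_{3,4}\!\left(16p^{2k+1}m+2p^{2k+2}+1\right)\equiv 0\pmod 8\quad\text{and}\quad b^{4}_{3,4}\!\left(48p^{2k+1}m+6p^{2k+2}+1\right)\equiv 0\pmod 8.$$
   Context: For integers $r\ge1$ write $f_r=\prod_{i\ge1}(1-q^{ri})$. $b^{4}_{3,4}(n)$ is the number of $4$-colored partitions of $n$ into parts not divisible by $3$ or $4$, i.e. $\sum_{n\ge0}b^4_{3,4}(n)q^n=\dfrac{f_3^4f_4^4}{f_1^4f_{12}^4}$. $\left(\frac{a}{p}\right)$ denotes the Legendre symbol. *)

theory Defs
  imports "HOL-Computational_Algebra.Formal_Power_Series" "HOL-Number_Theory.Number_Theory"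
begin

definition f_trunc :: "nat \<Rightarrow> nat \<Rightarrow> rat fps" where
  "f_trunc N r = (\<Prod>i\<in>{1..N}. 1 - fps_X ^ (r * i))"

(* Factors (1-q^{ri}) with r i > n
   do not affect the coefficient of q^n, so truncating the products at i = n is exact.  The coefficient is an integer (constant term of the
   denominator is 1); floor is only used to view it in int. *)
definition b434 :: "nat \<Rightarrow> int" where
  "b434 n = \<lfloor>fps_nth ((f_trunc n 3) ^ 4 * (f_trunc n 4) ^ 4
                     / ((f_trunc n 1) ^ 4 * (f_trunc n 12) ^ 4)) n\<rfloor>"

end

theory Submission
  imports Defs
begin
unbundle fps_syntax


section \<open>Agreement of coefficients below N\<close>

definition eqm :: "nat \<Rightarrow> rat fps \<Rightarrow> rat fps \<Rightarrow> bool" where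
  "eqm N a b \<longleftrightarrow> (\<forall>i<N. a $ i = b $ i)"

lemma eqm_refl[simp]: "eqm N a a" by (simp add: eqm_def)
lemma eqm_sym: "eqm N a b \<Longrightarrow> eqm N b a" by (simp add: eqm_def)
lemma eqm_trans: "eqm N a b \<Longrightarrow> eqm N b c \<Longrightarrow> eqm N a c" by (simp add: eqm_def)
lemma eqm_mono: "eqm N a b \<Longrightarrow> M \<le> N \<Longrightarrow> eqm M a b" by (simp add: eqm_def)
lemma eqm_add: "eqm N a b \<Longrightarrow> eqm N c d \<Longrightarrow> eqm N (a + c) (b + d)" by (simp add: eqm_def)
lemma eqm_diff: "eqm N a b \<Longrightarrow> eqm N c d \<Longrightarrow> eqm N (a - c) (b - d)" by (simp add: eqm_def)
lemma eqm_mult: "eqm N a b \<Longrightarrow> eqm N c d \<Longrightarrow> eqm N (a * c) (b * d)"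
  unfolding eqm_def fps_mult_nth by (auto intro!: sum.cong)
lemma eqm_power: "eqm N a b \<Longrightarrow> eqm N (a ^ k) (b ^ k)"
  by (induction k) (auto intro: eqm_mult)
lemma eqm_sum: "(\<And>i. i \<in> S \<Longrightarrow> eqm N (f i) (g i)) \<Longrightarrow> eqm N (sum f S) (sum g S)"
  unfolding eqm_def fps_sum_nth by (auto intro!: sum.cong)
lemma eqm_prod: "(\<And>i. i \<in> S \<Longrightarrow> eqm N (f i) (g i)) \<Longrightarrow> eqm N (prod f S) (prod g S)"
proof (induction S rule: infinite_finite_induct)
  case (insert x F) then show ?case by (simp add: eqm_mult)
qed auto
lemma eqm_Xpow: "N \<le> k \<Longrightarrow> eqm N (fps_X ^ k * a) 0"
  by (simp add: eqm_def fps_X_power_mult_nth)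
lemma eqm_Xpow': "N \<le> k \<Longrightarrow> eqm N (fps_X ^ k) 0"
  using eqm_Xpow[of N k 1] by simp
lemma eqm_mult_zero: "eqm N a 0 \<Longrightarrow> eqm N (a * c) 0"
  using eqm_mult[of N a 0 c c] by simp
lemma eqm_iff_diff: "eqm N a b \<longleftrightarrow> eqm N (a - b) 0"
  by (simp add: eqm_def)
lemma inv_diff:
  fixes a b :: "rat fps"
  assumes "a $ 0 \<noteq> 0" "b $ 0 \<noteq> 0"
  shows "inverse a - inverse b = (b - a) * (inverse a * inverse b)"
proof -
  have ha: "a * inverse a = 1" and hb: "b * inverse b = 1"
    using assms by (simp_all add: inverse_mult_eq_1')
  have "inverse a - inverse b = inverse a * (b * inverse b) - (a * inverse a) * inverse b"
    by (simp add: ha hb)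
  also have "\<dots> = (b - a) * (inverse a * inverse b)" by (simp add: algebra_simps)
  finally show ?thesis .
qed
lemma eqm_inverse:
  assumes "eqm N a b" "a $ 0 \<noteq> 0" "b $ 0 \<noteq> 0"
  shows "eqm N (inverse a) (inverse b)"
proof -
  have "eqm N (b - a) 0" using assms(1) by (simp add: eqm_def)
  then have "eqm N ((b - a) * (inverse a * inverse b)) 0" by (rule eqm_mult_zero)
  then show ?thesis by (simp add: eqm_iff_diff[of N "inverse a"] inv_diff[OF assms(2,3)])
qed
lemma eqm_all: "(\<And>N. eqm N a b) \<Longrightarrow> a = b"
  unfolding eqm_def by (simp add: fps_eq_iff) (meson lessI)

section \<open>Integrality and congruences\<close>

definition isint :: "rat fps \<Rightarrow> bool" where
  "isint a \<longleftrightarrow> (\<forall>n. a $ n \<in> \<int>)"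

lemma isint_0[simp]: "isint 0" and isint_1[simp]: "isint 1" and isint_X[simp]: "isint fps_X"
  by (auto simp: isint_def fps_X_def)
lemma isint_const[simp]: "isint (fps_const (of_int c))" by (auto simp: isint_def)
lemma isint_numeral[simp]: "isint (numeral k)"
  by (auto simp: isint_def numeral_fps_const)
lemma isint_add[simp]: "isint a \<Longrightarrow> isint b \<Longrightarrow> isint (a + b)"
  by (auto simp: isint_def)
lemma isint_diff[simp]: "isint a \<Longrightarrow> isint b \<Longrightarrow> isint (a - b)"
  by (auto simp: isint_def)
lemma isint_uminus[simp]: "isint a \<Longrightarrow> isint (- a)"
  by (auto simp: isint_def)
lemma Ints_sum': "(\<And>i. i \<in> S \<Longrightarrow> f i \<in> \<int>) \<Longrightarrow> sum f S \<in> (\<int>::rat set)"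
  by (induction S rule: infinite_finite_induct) auto
lemma isint_mult[simp]: "isint a \<Longrightarrow> isint b \<Longrightarrow> isint (a * b)"
  unfolding isint_def fps_mult_nth by (auto intro!: Ints_sum')
lemma isint_power[simp]: "isint a \<Longrightarrow> isint (a ^ k)"
  by (induction k) auto
lemma isint_Xpow[simp]: "isint (fps_X ^ k)" by simp
lemma isint_prod: "(\<And>i. i \<in> S \<Longrightarrow> isint (f i)) \<Longrightarrow> isint (prod f S)"
  by (induction S rule: infinite_finite_induct) auto
lemma isint_sum: "(\<And>i. i \<in> S \<Longrightarrow> isint (f i)) \<Longrightarrow> isint (sum f S)"
  by (induction S rule: infinite_finite_induct) auto

lemma isint_inverse:
  assumes "isint a" "a $ 0 = 1"
  shows "isint (inverse a)"
proof -
  let ?b = "inverse a"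
  have ab: "a * ?b = 1" using assms(2) by (simp add: inverse_mult_eq_1')
  have "?b $ n \<in> \<int>" for n
  proof (induction n rule: less_induct)
    case (less n)
    show ?case
    proof (cases n)
      case 0 then show ?thesis using assms(2) by simp
    next
      case (Suc k)
      have "(a * ?b) $ n = 0" using ab Suc by simp
      hence "(\<Sum>i=0..n. a $ i * ?b $ (n - i)) = 0" by (simp add: fps_mult_nth)
      moreover have "(\<Sum>i=0..n. a $ i * ?b $ (n - i)) = a $ 0 * ?b $ n + (\<Sum>i=1..n. a $ i * ?b $ (n - i))"
        by (simp add: sum.atLeast_Suc_atMost)
      ultimately have "?b $ n = - (\<Sum>i=1..n. a $ i * ?b $ (n - i))" using assms(2) by simp
      moreover have "(\<Sum>i=1..n. a $ i * ?b $ (n - i)) \<in> \<int>"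
        using assms(1) less Suc by (intro Ints_sum') (auto simp: isint_def)
      ultimately show ?thesis by simp
    qed
  qed
  then show ?thesis by (simp add: isint_def)
qed

definition fcong :: "rat \<Rightarrow> rat fps \<Rightarrow> rat fps \<Rightarrow> bool" where
  "fcong m a b \<longleftrightarrow> isint a \<and> isint b \<and> (\<exists>c. isint c \<and> a - b = fps_const m * c)"

lemma fcong_coeff: "fcong m a b \<Longrightarrow> m \<noteq> 0 \<Longrightarrow> (a $ n - b $ n) / m \<in> \<int>"
proof -
  assume h: "fcong m a b" "m \<noteq> 0"
  then obtain c where c: "isint c" "a - b = fps_const m * c" by (auto simp: fcong_def)
  have "(a - b) $ n = m * c $ n" by (simp add: c(2))
  then have "(a $ n - b $ n) / m = c $ n" using h(2) by simp
  then show ?thesis using c(1) by (simp add: isint_def)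
qed

lemma fcong_coeffI:
  assumes "isint a" "isint b" "m \<noteq> 0" "\<And>n. (a $ n - b $ n) / m \<in> \<int>"
  shows "fcong m a b"
  unfolding fcong_def
proof (intro conjI assms(1,2) exI)
  let ?c = "Abs_fps (\<lambda>n. (a $ n - b $ n) / m)"
  show "isint ?c" using assms(4) by (simp add: isint_def)
  show "a - b = fps_const m * ?c" using assms(3) by (simp add: fps_eq_iff)
qed

lemma fcong_isint: "fcong m a b \<Longrightarrow> isint a" "fcong m a b \<Longrightarrow> isint b"
  by (auto simp: fcong_def)
lemma fcong_refl[simp]: "isint a \<Longrightarrow> fcong m a a"
  unfolding fcong_def by (rule conjI, simp, simp, rule exI[of _ 0]) simp
lemma fcong_sym: "fcong m a b \<Longrightarrow> fcong m b a"
proof -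
  assume "fcong m a b"
  then obtain c where c: "isint a" "isint b" "isint c" "a - b = fps_const m * c" by (auto simp: fcong_def)
  have "b - a = fps_const m * (- c)" by (metis c(4) minus_diff_eq mult_minus_right)
  moreover have "isint (- c)" using c by simp
  ultimately show ?thesis unfolding fcong_def using c by blast
qed
lemma fcong_trans: "fcong m a b \<Longrightarrow> fcong m b c \<Longrightarrow> fcong m a c"
proof -
  assume "fcong m a b" "fcong m b c"
  then obtain c1 c2 where c: "isint a" "isint b" "isint c" "isint c1" "isint c2"
    "a - b = fps_const m * c1" "b - c = fps_const m * c2" by (auto simp: fcong_def)
  have "a - c = (a - b) + (b - c)" by simp
  also have "\<dots> = fps_const m * (c1 + c2)" by (simp add: c(6,7) distrib_left)
  finally have "a - c = fps_const m * (c1 + c2)" .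
  moreover have "isint (c1 + c2)" using c by simp
  ultimately show ?thesis unfolding fcong_def using c by blast
qed
lemma fcong_add: "fcong m a b \<Longrightarrow> fcong m c d \<Longrightarrow> fcong m (a + c) (b + d)"
proof -
  assume "fcong m a b" "fcong m c d"
  then obtain c1 c2 where c: "isint a" "isint b" "isint c" "isint d" "isint c1" "isint c2"
    "a - b = fps_const m * c1" "c - d = fps_const m * c2" by (auto simp: fcong_def)
  have "(a + c) - (b + d) = (a - b) + (c - d)" by simp
  also have "\<dots> = fps_const m * (c1 + c2)" by (simp add: c(7,8) distrib_left)
  finally have "(a + c) - (b + d) = fps_const m * (c1 + c2)" .
  moreover have "isint (c1 + c2)" "isint (a + c)" "isint (b + d)" using c by simp_all
  ultimately show ?thesis unfolding fcong_def using c by blast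
qed
lemma fcong_mult: "fcong m a b \<Longrightarrow> fcong m c d \<Longrightarrow> fcong m (a * c) (b * d)"
  unfolding fcong_def
proof (elim conjE exE, intro conjI exI)
  fix c1 c2 assume *: "isint c1" "a - b = fps_const m * c1" "isint c2" "c - d = fps_const m * c2"
    "isint a" "isint b" "isint c" "isint d"
  have "a * c - b * d = (a - b) * c + b * (c - d)" by (simp add: algebra_simps)
  also have "\<dots> = fps_const m * (c1 * c + b * c2)" using * by (simp add: algebra_simps)
  finally show "a * c - b * d = fps_const m * (c1 * c + b * c2)" .
  show "isint (c1 * c + b * c2)" using * by simp
qed auto
lemma fcong_power: assumes "fcong m a b" shows "fcong m (a ^ k) (b ^ k)"
  by (induction k) (simp_all add: fcong_mult[OF assms])
lemma fcong_inverse: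
  assumes "fcong m a b" "a $ 0 = 1" "b $ 0 = 1"
  shows "fcong m (inverse a) (inverse b)"
proof -
  have ia: "isint (inverse a)" "isint (inverse b)" using assms fcong_isint isint_inverse by blast+
  have "inverse a - inverse b = (b - a) * (inverse a * inverse b)"
    using assms(2,3) by (intro inv_diff) auto
  moreover have "fcong m ((b - a) * (inverse a * inverse b)) (0 * (inverse a * inverse b))"
  proof (rule fcong_mult)
    show "fcong m (b - a) 0" using fcong_sym[OF assms(1)] unfolding fcong_def by auto
  qed (use ia in simp)
  ultimately have "fcong m (inverse a - inverse b) 0" by simp
  then show ?thesis using ia unfolding fcong_def
    by auto
qed
lemma fcong_cancel:
  assumes "fcong m (a * u) (b * u)" "isint a" "isint b" "isint u" "u $ 0 = 1"
  shows "fcong m a b"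
proof -
  have "fcong m (a * u * inverse u) (b * u * inverse u)"
    by (rule fcong_mult[OF assms(1) fcong_refl]) (rule isint_inverse[OF assms(4,5)])
  moreover have "u * inverse u = 1" using assms(5) by (simp add: inverse_mult_eq_1')
  ultimately show ?thesis by (simp add: mult.assoc)
qed
lemma fcong_const2: "fcong 2 a b \<longleftrightarrow> isint a \<and> isint b \<and> (\<exists>c. isint c \<and> a = b + 2 * c)"
  unfolding fcong_def by (auto simp: numeral_fps_const algebra_simps)
lemma fcong_const8: "fcong 8 a b \<longleftrightarrow> isint a \<and> isint b \<and> (\<exists>c. isint c \<and> a = b + 8 * c)"
  unfolding fcong_def by (auto simp: numeral_fps_const algebra_simps)
lemma fcong_scale:
  assumes "fcong 2 a b"
  shows "fcong 8 (4 * a) (4 * b)"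
proof -
  obtain c where c: "isint c" "a = b + 2 * c" "isint a" "isint b" using assms fcong_const2 by auto
  have "4 * a = 4 * b + 8 * c" unfolding c(2) by (simp add: algebra_simps)
  then show ?thesis using c unfolding fcong_const8 by auto
qed
lemma pow4_gen: fixes b c :: "'a::comm_ring_1"
  shows "(b + 2 * c) ^ 4 = b ^ 4 + 8 * (b^3 * c + 3 * b^2 * c^2 + 4 * b * c^3 + 2 * c^4)"
  by (simp add: power4_eq_xxxx power3_eq_cube power2_eq_square algebra_simps)
lemma fcong_pow4:
  assumes "fcong 2 a b"
  shows "fcong 8 (a ^ 4) (b ^ 4)"
proof -
  obtain c where c: "isint c" "a = b + 2 * c" "isint a" "isint b" using assms fcong_const2 by auto
  have "a ^ 4 = b ^ 4 + 8 * (b^3 * c + 3 * b^2 * c^2 + 4 * b * c^3 + 2 * c^4)"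
    unfolding c(2) by (rule pow4_gen)
  moreover have "isint (b^3 * c + 3 * b^2 * c^2 + 4 * b * c^3 + 2 * c^4)" using c by simp
  moreover have "isint (a ^ 4)" "isint (b ^ 4)" using c by simp_all
  ultimately show ?thesis unfolding fcong_const8 by blast
qed


section \<open>Dilation q -> q^r\<close>

definition dil :: "nat \<Rightarrow> rat fps \<Rightarrow> rat fps" where
  "dil r a = a oo fps_X ^ r"

lemma Xpow0: "r > 0 \<Longrightarrow> (fps_X ^ r :: rat fps) $ 0 = 0" by simp

lemma dil_nth: assumes "r > 0"
  shows "dil r a $ n = (if r dvd n then a $ (n div r) else 0)"
proof -
  have "dil r a $ n = (\<Sum>i=0..n. a $ i * (fps_X ^ (r * i)) $ n)"
    unfolding dil_def fps_compose_nth by (simp add: power_mult)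
  also have "\<dots> = (\<Sum>i=0..n. if i = n div r \<and> r dvd n then a $ i else 0)"
    using assms by (intro sum.cong) auto
  also have "\<dots> = (if r dvd n then a $ (n div r) else 0)"
  proof (cases "r dvd n")
    case True
    have "n div r \<le> n" by simp
    then show ?thesis using True by (simp add: sum.delta')
  qed simp
  finally show ?thesis .
qed

lemma dil_mult: "r > 0 \<Longrightarrow> dil r (a * b) = dil r a * dil r b"
  unfolding dil_def by (rule fps_compose_mult_distrib) simp
lemma dil_add: "dil r (a + b) = dil r a + dil r b"
  unfolding dil_def by (rule fps_compose_add_distrib)
lemma dil_diff: "dil r (a - b) = dil r a - dil r b"
  unfolding dil_def by (rule fps_compose_sub_distrib)
lemma dil_power: "r > 0 \<Longrightarrow> dil r (a ^ k) = dil r a ^ k"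
  unfolding dil_def by (rule fps_compose_power[symmetric]) simp
lemma dil_prod: "r > 0 \<Longrightarrow> dil r (prod f S) = prod (\<lambda>i. dil r (f i)) S"
  unfolding dil_def by (rule fps_compose_prod_distrib) simp
lemma dil_1[simp]: "dil r 1 = 1" unfolding dil_def by simp
lemma dil_0[simp]: "dil r 0 = 0" unfolding dil_def by simp
lemma dil_numeral[simp]: "dil r (numeral k) = numeral k" unfolding dil_def by simp
lemma dil_Xpow: "r > 0 \<Longrightarrow> dil r (fps_X ^ k) = fps_X ^ (r * k)"
  unfolding dil_def by (subst fps_X_power_compose) (simp_all add: power_mult)
lemma dil_X: "r > 0 \<Longrightarrow> dil r fps_X = fps_X ^ r"
  using dil_Xpow[of r 1] by simp
lemma dil_inverse: "r > 0 \<Longrightarrow> a $ 0 \<noteq> 0 \<Longrightarrow> dil r (inverse a) = inverse (dil r a)"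
  unfolding dil_def by (rule fps_inverse_compose) simp_all
lemma dil_nth0[simp]: "dil r a $ 0 = a $ 0" unfolding dil_def by simp
lemma dil_dil: assumes "r > 0" "s > 0" shows "dil r (dil s a) = dil (s * r) a"
proof -
  have "dil r (dil s a) = a oo (fps_X ^ s oo fps_X ^ r)"
    unfolding dil_def using assms by (subst fps_compose_assoc) simp_all
  also have "\<dots> = dil (s * r) a" unfolding dil_def using assms
    by (subst fps_X_power_compose) (simp_all add: power_mult mult.commute)
  finally show ?thesis .
qed
lemma isint_dil[simp]: "r > 0 \<Longrightarrow> isint a \<Longrightarrow> isint (dil r a)"
  by (auto simp: isint_def dil_nth)
lemma fcong_dil: assumes "r > 0" "fcong m a b" shows "fcong m (dil r a) (dil r b)"
proof -
  obtain c where c: "isint a" "isint b" "isint c" "a - b = fps_const m * c"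
    using assms(2) by (auto simp: fcong_def)
  have "dil r a - dil r b = dil r (fps_const m * c)" by (simp add: dil_diff[symmetric] c(4))
  also have "\<dots> = dil r (fps_const m) * dil r c" by (rule dil_mult[OF assms(1)])
  also have "dil r (fps_const m) = fps_const m" by (simp add: dil_def)
  finally have "dil r a - dil r b = fps_const m * dil r c" .
  then show ?thesis using c assms(1) unfolding fcong_def by (meson isint_dil)
qed

section \<open>Frobenius modulo 2\<close>

lemma Ints_sq_minus: "(x::rat) \<in> \<int> \<Longrightarrow> (x * x - x) / 2 \<in> \<int>"
proof -
  assume "x \<in> \<int>"
  then obtain z where z: "x = of_int z" by (auto elim: Ints_cases)
  have "even (z * z - z)" by simp
  then obtain w where "z * z - z = 2 * w" unfolding dvd_def by blast
  then have "(x * x - x) / 2 = of_int w" unfolding z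
    by (metis (mono_tags, lifting) nonzero_mult_div_cancel_left of_int_diff of_int_mult of_int_numeral zero_neq_numeral)
  then show ?thesis by simp
qed

lemma frob_sum:
  fixes f :: "nat \<Rightarrow> rat"
  assumes "\<And>i. f i \<in> \<int>"
  shows "((\<Sum>i=0..n. f i * f (n - i)) - (if even n then f (n div 2) else 0)) / 2 \<in> \<int>"
proof -
  let ?g = "\<lambda>i. f i * f (n - i)"
  define L where "L = {i. 2 * i < n}"
  define R where "R = {i. n < 2 * i \<and> i \<le> n}"
  define M where "M = {i. 2 * i = n}"
  have fin: "finite L" "finite R" "finite M" unfolding L_def R_def M_def
    by (auto intro: finite_subset[of _ "{0..n}"])
  have split: "{0..n} = L \<union> R \<union> M" unfolding L_def R_def M_def by auto
  have disj: "L \<inter> R = {}" "(L \<union> R) \<inter> M = {}" unfolding L_def R_def M_def by auto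
  have "sum ?g {0..n} = sum ?g L + sum ?g R + sum ?g M"
    unfolding split using fin disj by (simp add: sum.union_disjoint)
  moreover have "sum ?g R = sum ?g L"
  proof (rule sum.reindex_bij_witness[of _ "\<lambda>i. n - i" "\<lambda>i. n - i"])
  qed (auto simp: L_def R_def mult.commute)
  moreover have "sum ?g M = (if even n then f (n div 2) * f (n div 2) else 0)"
  proof (cases "even n")
    case True
    then have "M = {n div 2}" unfolding M_def by auto
    moreover have "n - n div 2 = n div 2" using True by auto
    ultimately show ?thesis using True by simp
  next
    case False
    then have "M = {}" unfolding M_def by auto
    then show ?thesis using False by simp
  qed
  ultimately have eq: "sum ?g {0..n} - (if even n then f (n div 2) else 0)
      = 2 * sum ?g L + (if even n then f (n div 2) * f (n div 2) - f (n div 2) else 0)"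
    by simp
  have "sum ?g L \<in> \<int>" using assms by (intro Ints_sum') auto
  moreover have "(if even n then f (n div 2) * f (n div 2) - f (n div 2) else 0) / 2 \<in> \<int>"
    using Ints_sq_minus[OF assms[of "n div 2"]] by simp
  ultimately show ?thesis unfolding eq by (simp add: add_divide_distrib)
qed

lemma frob: assumes "isint a" shows "fcong 2 (a ^ 2) (dil 2 a)"
proof (rule fcong_coeffI)
  show "isint (a^2)" "isint (dil 2 a)" using assms by simp_all
  fix n
  have "(a^2) $ n = (\<Sum>i=0..n. a $ i * a $ (n - i))" by (simp add: power2_eq_square fps_mult_nth)
  moreover have "dil 2 a $ n = (if even n then a $ (n div 2) else 0)" by (simp add: dil_nth)
  ultimately show "((a^2) $ n - dil 2 a $ n) / 2 \<in> \<int>"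
    using frob_sum[of "\<lambda>i. a $ i" n] assms by (simp add: isint_def)
qed simp

lemma frob4: assumes "isint a" shows "fcong 2 (a ^ 4) (dil 4 a)"
proof -
  have "fcong 2 ((a^2)^2) ((dil 2 a)^2)" by (rule fcong_power[OF frob[OF assms]])
  moreover have "fcong 2 ((dil 2 a)^2) (dil 2 (dil 2 a))" by (rule frob) (simp add: assms)
  ultimately have "fcong 2 ((a^2)^2) (dil 2 (dil 2 a))" by (rule fcong_trans)
  then show ?thesis by (simp add: dil_dil flip: power_mult)
qed

section \<open>The Euler function\<close>

definition E :: "rat fps" where "E = Abs_fps (\<lambda>m. f_trunc m 1 $ m)"

lemma isint_ftrunc: "isint (f_trunc N r)"
  unfolding f_trunc_def by (intro isint_prod) simp

lemma ftrunc_dil: "r > 0 \<Longrightarrow> dil r (f_trunc N 1) = f_trunc N r"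
  unfolding f_trunc_def by (simp add: dil_prod dil_diff dil_Xpow)

lemma ftrunc_eqm: assumes "M \<le> N" shows "eqm (M+1) (f_trunc N 1) (f_trunc M 1)"
proof -
  have "f_trunc N 1 = f_trunc M 1 * (\<Prod>i\<in>{M+1..M+(N-M)}. 1 - fps_X ^ i)"
    unfolding f_trunc_def using assms prod.ub_add_nat[of 1 M "\<lambda>i. 1 - fps_X ^ (1 * i) :: rat fps" "N - M"]
    by simp
  moreover have "eqm (M+1) (\<Prod>i\<in>{M+1..M+(N-M)}. 1 - fps_X ^ i :: rat fps) (\<Prod>i\<in>{M+1..M+(N-M)}. 1)"
    by (intro eqm_prod) (auto intro: eqm_diff[of _ 1 1 _ 0, simplified] eqm_Xpow')
  note h = eqm_mult[OF eqm_refl[of "M+1" "f_trunc M 1"] this]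
  ultimately show ?thesis by simp
qed

lemma E_eqm: "eqm (N+1) (f_trunc N 1) E"
  unfolding eqm_def E_def
proof (intro allI impI)
  fix i assume "i < N + 1"
  then have "eqm (i+1) (f_trunc N 1) (f_trunc i 1)" by (intro ftrunc_eqm) simp
  then show "f_trunc N 1 $ i = Abs_fps (\<lambda>m. f_trunc m 1 $ m) $ i" by (simp add: eqm_def)
qed

lemma isint_E[simp]: "isint E"
  using isint_ftrunc by (simp add: isint_def E_def)
lemma E0[simp]: "E $ 0 = 1"
  by (simp add: E_def f_trunc_def)

lemma Er_eqm: assumes "r > 0" shows "eqm (N+1) (f_trunc N r) (dil r E)"
  unfolding eqm_def
proof (intro allI impI)
  fix i assume i: "i < N + 1"
  have "f_trunc N r $ i = dil r (f_trunc N 1) $ i" using ftrunc_dil[OF assms, of N] by simp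
  also have "\<dots> = dil r E $ i"
  proof (cases "r dvd i")
    case True
    have "i div r < N + 1" using i by (meson div_le_dividend le_less_trans)
    then show ?thesis using E_eqm[of N] True assms by (simp add: dil_nth eqm_def)
  qed (simp add: dil_nth assms)
  finally show "f_trunc N r $ i = dil r E $ i" .
qed

section \<open>Even and odd series\<close>

definition evp :: "rat fps \<Rightarrow> bool" where "evp a \<longleftrightarrow> (\<forall>n. odd n \<longrightarrow> a $ n = 0)"
definition odp :: "rat fps \<Rightarrow> bool" where "odp a \<longleftrightarrow> (\<forall>n. even n \<longrightarrow> a $ n = 0)"

lemma par_split: "odd (n::nat) \<Longrightarrow> i \<le> n \<Longrightarrow> (odd i \<and> even (n - i)) \<or> (even i \<and> odd (n - i))"
  by presburger
lemma par_split2: "even (n::nat) \<Longrightarrow> i \<le> n \<Longrightarrow> (odd i \<and> odd (n - i)) \<or> (even i \<and> even (n - i))"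
  by presburger
lemma evp_mult: assumes "evp a" "evp b" shows "evp (a * b)"
  unfolding evp_def fps_mult_nth
proof (intro allI impI sum.neutral ballI)
  fix n i :: nat assume "odd n" "i \<in> {0..n}"
  then consider "odd i" | "odd (n - i)" using par_split[of n i] by auto
  then show "a $ i * b $ (n - i) = 0" by cases (use assms in \<open>auto simp: evp_def\<close>)
qed
lemma odp_mult: assumes "odp a" "odp b" shows "evp (a * b)"
  unfolding evp_def fps_mult_nth
proof (intro allI impI sum.neutral ballI)
  fix n i :: nat assume "odd n" "i \<in> {0..n}"
  then consider "even i" | "even (n - i)" using par_split[of n i] by auto
  then show "a $ i * b $ (n - i) = 0" by cases (use assms in \<open>auto simp: odp_def\<close>)
qed
lemma evodp_mult: assumes "evp a" "odp b" shows "odp (a * b)"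
  unfolding odp_def fps_mult_nth
proof (intro allI impI sum.neutral ballI)
  fix n i :: nat assume "even n" "i \<in> {0..n}"
  then consider "odd i" | "even (n - i)" using par_split2[of n i] by auto
  then show "a $ i * b $ (n - i) = 0" by cases (use assms in \<open>auto simp: odp_def evp_def\<close>)
qed
lemma evp_add: "evp a \<Longrightarrow> evp b \<Longrightarrow> evp (a + b)" by (simp add: evp_def)
lemma evp_1[simp]: "evp 1" by (simp add: evp_def)
lemma evp_numeral[simp]: "evp (numeral k)" by (simp add: evp_def numeral_fps_const)
lemma evp_power: "evp a \<Longrightarrow> evp (a ^ k)" by (induction k) (auto intro: evp_mult)
lemma evp_dil2: "evp (dil 2 a)" by (simp add: evp_def dil_nth)

definition evpart :: "rat fps \<Rightarrow> rat fps" where "evpart a = Abs_fps (\<lambda>n. if even n then a $ n else 0)"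
definition odpart :: "rat fps \<Rightarrow> rat fps" where "odpart a = Abs_fps (\<lambda>n. if odd n then a $ n else 0)"
lemma evod_split: "a = evpart a + odpart a" by (simp add: fps_eq_iff evpart_def odpart_def)
lemma evp_evpart: "evp (evpart a)" by (simp add: evp_def evpart_def)
lemma odp_odpart: "odp (odpart a)" by (simp add: odp_def odpart_def)
lemma isint_evpart: "isint a \<Longrightarrow> isint (evpart a)" by (simp add: isint_def evpart_def)
lemma isint_odpart: "isint a \<Longrightarrow> isint (odpart a)" by (simp add: isint_def odpart_def)
lemma fcong_evpart: assumes "fcong 2 a b" shows "fcong 2 (evpart a) (evpart b)"
proof (rule fcong_coeffI)
  show "isint (evpart a)" "isint (evpart b)" using assms fcong_isint isint_evpart by blast+
qed (use fcong_coeff[OF assms] in \<open>auto simp: evpart_def\<close>)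
lemma fcong_odpart: assumes "fcong 2 a b" shows "fcong 2 (odpart a) (odpart b)"
proof (rule fcong_coeffI)
  show "isint (odpart a)" "isint (odpart b)" using assms fcong_isint isint_odpart by blast+
qed (use fcong_coeff[OF assms] in \<open>auto simp: odpart_def\<close>)


section \<open>Gaussian binomials and the finite q-binomial theorem\<close>

definition poch :: "nat \<Rightarrow> rat fps" where "poch k = (\<Prod>i\<in>{1..k}. 1 - fps_X ^ i)"
lemma poch_ftrunc: "poch k = f_trunc k 1" by (simp add: poch_def f_trunc_def)

lemma poch_Suc: "poch (Suc k) = poch k * (1 - fps_X ^ Suc k)"
  by (simp add: poch_def)
lemma poch_0[simp]: "poch 0 = 1" by (simp add: poch_def)
lemma poch_nth0[simp]: "poch k $ 0 = 1"
  by (induction k) (simp_all add: poch_Suc)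
lemma poch_inv: "poch k * inverse (poch k) = 1"
  by (simp add: inverse_mult_eq_1')

definition gb :: "nat \<Rightarrow> nat \<Rightarrow> rat fps" where
  "gb m k = (if k \<le> m then poch m * inverse (poch k) * inverse (poch (m - k)) else 0)"

lemma gb_0[simp]: "gb m 0 = 1" by (simp add: gb_def poch_inv)
lemma gb_diag[simp]: "gb m m = 1" by (simp add: gb_def poch_inv)
lemma gb_gt: "m < k \<Longrightarrow> gb m k = 0" by (simp add: gb_def)

lemma inv_Suc: "inverse (poch k) = inverse (poch (Suc k)) * (1 - fps_X ^ Suc k)"
proof -
  have "inverse (poch (Suc k)) = inverse (poch k) * inverse (1 - fps_X ^ Suc k)"
    by (simp add: poch_Suc fps_inverse_mult)
  moreover have "inverse (1 - fps_X ^ Suc k :: rat fps) * (1 - fps_X ^ Suc k) = 1"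
    by (simp add: inverse_mult_eq_1)
  ultimately show ?thesis by (simp add: mult.assoc)
qed

lemma gb_pascal:
  assumes "k \<le> m"
  shows "gb (Suc m) (Suc k) = gb m (Suc k) + fps_X ^ (m - k) * gb m k"
proof (cases "k = m")
  case True
  then show ?thesis by (simp add: gb_gt)
next
  case False
  then have km: "Suc k \<le> m" using assms by simp
  define A where "A = inverse (poch (Suc k))"
  define B where "B = inverse (poch (m - k))"
  have mk: "Suc m - Suc k = m - k" "m - Suc k = m - k - 1" by simp_all
  have iB: "inverse (poch (m - Suc k)) = B * (1 - fps_X ^ (m - k))"
    using inv_Suc[of "m - Suc k"] km unfolding B_def by (simp add: Suc_diff_Suc)
  have iA: "inverse (poch k) = A * (1 - fps_X ^ Suc k)"
    using inv_Suc[of k] unfolding A_def by simp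
  have "gb m (Suc k) + fps_X ^ (m - k) * gb m k
      = poch m * A * (B * (1 - fps_X ^ (m - k))) + fps_X ^ (m - k) * (poch m * (A * (1 - fps_X ^ Suc k)) * B)"
    using km assms by (simp add: gb_def iB iA A_def B_def)
  also have "\<dots> = poch m * A * B * ((1 - fps_X ^ (m - k)) + fps_X ^ (m - k) * (1 - fps_X ^ Suc k))"
    by (simp add: algebra_simps)
  also have "(1 - fps_X ^ (m - k)) + fps_X ^ (m - k) * (1 - fps_X ^ Suc k) = (1 - fps_X ^ Suc m :: rat fps)"
    using km by (simp add: algebra_simps flip: power_add)
  also have "poch m * A * B * (1 - fps_X ^ Suc m) = poch (Suc m) * A * B"
    by (simp add: poch_Suc algebra_simps)
  also have "\<dots> = gb (Suc m) (Suc k)"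
    using km by (simp add: gb_def A_def B_def mk)
  finally show ?thesis ..
qed

lemma tri_step: "Suc k * k div 2 = k * (k - 1) div 2 + k"
proof -
  have "Suc k * k = k * (k - 1) + 2 * k" by (cases k) (simp_all add: algebra_simps)
  then show ?thesis by simp
qed

lemma qbinom:
  "(\<Prod>i<m. fps_X ^ a + fps_X ^ i :: rat fps)
     = (\<Sum>k=0..m. gb m k * fps_X ^ (k * (k - 1) div 2 + a * (m - k)))"
proof (induction m)
  case 0
  then show ?case by simp
next
  case (Suc m)
  define e where "e = (\<lambda>m k. k * (k - 1) div 2 + a * (m - k))"
  have c1: "e m k + a = e (Suc m) k" if "k \<le> m" for k
    using that unfolding e_def by (simp add: Suc_diff_le)
  have c2: "e m k + m = (m - k) + e (Suc m) (Suc k)" if "k \<le> m" for k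
  proof -
    have h1: "e (Suc m) (Suc k) = Suc k * k div 2 + a * (m - k)" by (simp add: e_def)
    have h2: "e m k = k * (k - 1) div 2 + a * (m - k)" by (simp add: e_def)
    show ?thesis using h1 h2 tri_step[of k] that by linarith
  qed
  have "(\<Prod>i<Suc m. fps_X ^ a + fps_X ^ i :: rat fps) = (\<Sum>k=0..m. gb m k * fps_X ^ e m k) * (fps_X ^ a + fps_X ^ m)"
    using Suc by (simp add: e_def)
  also have "\<dots> = (\<Sum>k=0..m. gb m k * fps_X ^ (e m k + a)) + (\<Sum>k=0..m. gb m k * fps_X ^ (e m k + m))"
    by (simp add: sum_distrib_right distrib_left sum.distrib power_add mult.assoc)
  also have "(\<Sum>k=0..m. gb m k * fps_X ^ (e m k + a)) = (\<Sum>k=0..m. gb m k * fps_X ^ e (Suc m) k)"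
    by (intro sum.cong) (simp_all add: c1)
  also have "(\<Sum>k=0..m. gb m k * fps_X ^ (e m k + m)) = (\<Sum>k=0..m. fps_X ^ (m - k) * gb m k * fps_X ^ e (Suc m) (Suc k))"
  proof (intro sum.cong refl)
    fix k assume "k \<in> {0..m}"
    then have "e m k + m = (m - k) + e (Suc m) (Suc k)" by (intro c2) simp
    then have "(fps_X :: rat fps) ^ (e m k + m) = fps_X ^ (m - k) * fps_X ^ e (Suc m) (Suc k)"
      by (simp only: power_add)
    then show "gb m k * fps_X ^ (e m k + m) = fps_X ^ (m - k) * gb m k * fps_X ^ e (Suc m) (Suc k)"
      by (simp add: mult.commute mult.left_commute)
  qed
  also have "(\<Sum>k=0..m. gb m k * fps_X ^ e (Suc m) k) = (\<Sum>k=0..Suc m. gb m k * fps_X ^ e (Suc m) k)"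
    by (simp add: gb_gt)
  also have "\<dots> = fps_X ^ e (Suc m) 0 + (\<Sum>k=0..m. gb m (Suc k) * fps_X ^ e (Suc m) (Suc k))"
    by (simp only: sum.atLeast0_atMost_Suc_shift gb_0 mult_1 mult_1_left o_def)
  finally have "(\<Prod>i<Suc m. fps_X ^ a + fps_X ^ i :: rat fps) = fps_X ^ e (Suc m) 0 +
      (\<Sum>k=0..m. (gb m (Suc k) + fps_X ^ (m - k) * gb m k) * fps_X ^ e (Suc m) (Suc k))"
    by (simp add: sum.distrib distrib_right add.assoc)
  also have "\<dots> = fps_X ^ e (Suc m) 0 + (\<Sum>k=0..m. gb (Suc m) (Suc k) * fps_X ^ e (Suc m) (Suc k))"
    by (simp add: gb_pascal)
  also have "\<dots> = (\<Sum>k=0..Suc m. gb (Suc m) k * fps_X ^ e (Suc m) k)"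
    by (simp only: sum.atLeast0_atMost_Suc_shift gb_0 mult_1 mult_1_left o_def)
  finally show ?case by (simp add: e_def)
qed


section \<open>Gauss identity\<close>

definition tri :: "nat \<Rightarrow> nat" where "tri j = j * (j + 1) div 2"

lemma even_consec: "even (n * (n + 1 :: nat))" by simp
lemma tri2: "2 * tri j = j * (j + 1)" unfolding tri_def using even_consec[of j] by simp
lemma tri_Suc: "tri (Suc j) = tri j + Suc j"
  using tri2[of j] tri2[of "Suc j"] by simp
lemma tri_mono: "i < j \<Longrightarrow> tri i < tri j"
proof (induction j)
  case (Suc j) then show ?case by (auto simp: tri_Suc less_Suc_eq)
qed simp
lemma tri_inj: "tri i = tri j \<longleftrightarrow> i = j"
  by (metis less_irrefl nat_neq_iff tri_mono)
lemma tri_ge: "j \<le> tri j"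
  by (induction j) (simp_all add: tri_Suc tri_def)

definition psi :: "rat fps" where "psi = Abs_fps (\<lambda>d. if \<exists>j. d = tri j then 1 else 0)"

definition Qn :: "nat \<Rightarrow> rat fps" where "Qn j = (\<Prod>i\<in>{1..j}. 1 + fps_X ^ i)"

lemma Qn_alt: "Qn j = (\<Prod>i<j. 1 + fps_X ^ Suc i)"
  unfolding Qn_def using prod.atLeast1_atMost_eq[of "\<lambda>i. 1 + fps_X ^ i :: rat fps" j] by simp

lemma Qn_poch: "Qn j * poch j = f_trunc j 2"
  unfolding Qn_def poch_def f_trunc_def
proof (subst prod.distrib[symmetric], intro prod.cong refl)
  fix i
  show "(1 + fps_X ^ i) * (1 - fps_X ^ i) = (1 - fps_X ^ (2 * i) :: rat fps)"
    by (simp add: algebra_simps power_mult_distrib flip: power_add mult_2)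
qed

lemma poch_eqm: "eqm (j+1) (poch j) E"
  using E_eqm[of j] by (simp add: poch_ftrunc)

lemma QE_eqm: "eqm (j+1) (Qn j * E) (dil 2 E)"
proof -
  have "eqm (j+1) (Qn j * E) (Qn j * poch j)"
    by (intro eqm_mult eqm_refl eqm_sym[OF poch_eqm])
  also have "Qn j * poch j = f_trunc j 2" by (rule Qn_poch)
  finally show ?thesis using Er_eqm[of 2 j] eqm_trans by simp
qed

lemma gb_poch: "k \<le> m \<Longrightarrow> gb m k * poch k * poch (m - k) = poch m"
  unfolding gb_def
  by (simp add: mult.assoc mult.left_commute[of "inverse (poch k)"] inverse_mult_eq_1)

lemma gb_eqm:
  assumes "k \<le> m"
  shows "eqm (min k (m - k) + 1) (gb m k * E) 1"
proof -
  let ?L = "min k (m - k) + 1"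
  have e1: "eqm ?L (poch k) E" by (rule eqm_mono[OF poch_eqm]) simp
  have e2: "eqm ?L (poch (m - k)) E" by (rule eqm_mono[OF poch_eqm]) simp
  have e3: "eqm ?L (poch m) E" by (rule eqm_mono[OF poch_eqm]) simp
  have "eqm ?L (gb m k * E * E) (gb m k * poch k * poch (m - k))"
    by (intro eqm_mult eqm_refl eqm_sym[OF e1] eqm_sym[OF e2])
  also have "gb m k * poch k * poch (m - k) = poch m" by (rule gb_poch[OF assms])
  finally have "eqm ?L (gb m k * E * E) E" using e3 eqm_trans by blast
  then have "eqm ?L (gb m k * E * E * inverse E) (E * inverse E)"
    by (intro eqm_mult eqm_refl)
  moreover have "E * inverse E = 1" by (simp add: inverse_mult_eq_1')
  ultimately show ?thesis by (simp add: mult.assoc)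
qed

lemma sum_tri_psi:
  assumes "N \<le> n"
  shows "eqm N (\<Sum>j<n. fps_X ^ tri j) psi"
  unfolding eqm_def
proof (intro allI impI)
  fix i assume i: "i < N"
  have lhs: "(\<Sum>j<n. fps_X ^ tri j :: rat fps) $ i = (\<Sum>j<n. if i = tri j then 1 else 0)"
    by (simp add: fps_sum_nth)
  show "(\<Sum>j<n. fps_X ^ tri j) $ i = psi $ i"
  proof (cases "\<exists>j. i = tri j")
    case True
    then obtain j0 where j0: "i = tri j0" by blast
    have "j0 < n" using tri_ge[of j0] j0 i assms by simp
    have "(\<Sum>j<n. if i = tri j then 1 else 0 :: rat) = (\<Sum>j<n. if j = j0 then 1 else 0)"
      by (intro sum.cong refl) (simp add: j0 tri_inj eq_commute)
    also have "\<dots> = 1" using \<open>j0 < n\<close> by simp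
    finally show ?thesis using lhs True by (simp add: psi_def)
  next
    case False
    then have "(\<Sum>j<n. if i = tri j then 1 else 0 :: rat) = 0" by (intro sum.neutral) auto
    then show ?thesis using lhs False by (simp add: psi_def)
  qed
qed

lemma term_eqm:
  assumes "N \<le> t \<or> eqm N (g * E) 1"
  shows "eqm N (E * (g * fps_X ^ t)) (fps_X ^ t)"
  using assms
proof
  assume "N \<le> t"
  then have a: "eqm N (fps_X ^ t * (E * g)) 0" and b: "eqm N (fps_X ^ t) 0"
    by (simp_all add: eqm_Xpow eqm_Xpow')
  have e: "E * (g * fps_X ^ t) = fps_X ^ t * (E * g)" by (simp add: algebra_simps)
  show ?thesis unfolding e by (rule eqm_trans[OF a eqm_sym[OF b]])
next
  assume "eqm N (g * E) 1"
  then have "eqm N (g * E * fps_X ^ t) (1 * fps_X ^ t)" by (intro eqm_mult eqm_refl)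
  then show ?thesis by (simp add: algebra_simps)
qed

lemma sum_lt_double: "2 * (\<Sum>i<r. i) = r * (r - 1 :: nat)"
proof (induction r)
  case (Suc r) then show ?case by (cases r) (simp_all add: algebra_simps)
qed simp

lemma lhs_prod:
  "(\<Prod>i<2*r+2. fps_X ^ r + fps_X ^ i :: rat fps) = 2 * fps_X ^ (3 * tri r) * Qn r * Qn (Suc r)"
proof -
  let ?f = "\<lambda>i. fps_X ^ r + fps_X ^ i :: rat fps"
  have "(\<Prod>i<2*r+2. ?f i) = prod ?f {0..<r} * prod ?f {r..<2*r+2}"
    by (simp add: prod.atLeastLessThan_concat atLeast0LessThan[symmetric])
  also have "prod ?f {r..<2*r+2} = prod ?f {0+r..<(r+2)+r}"
    by (rule arg_cong[where f="prod ?f"]) (simp add: mult_2)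
  also have "\<dots> = (\<Prod>j\<in>{0..<r+2}. ?f (j + r))"
    by (rule prod.shift_bounds_nat_ivl)
  also have "\<dots> = (\<Prod>j<Suc (Suc r). ?f (j + r))" by (simp add: atLeast0LessThan)
  also have "\<dots> = ?f r * (\<Prod>j<Suc r. ?f (Suc j + r))"
    by (subst prod.lessThan_Suc_shift) simp
  also have "(\<Prod>j<Suc r. ?f (Suc j + r)) = (\<Prod>j<Suc r. fps_X ^ r * (1 + fps_X ^ Suc j))"
    by (intro prod.cong refl) (simp add: algebra_simps power_add)
  also have "\<dots> = fps_X ^ (r * Suc r) * Qn (Suc r)"
    by (simp add: prod.distrib Qn_alt flip: power_mult power_add)
  also have "prod ?f {0..<r} = (\<Prod>i<r. fps_X ^ i * (1 + fps_X ^ (r - i)))"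
    by (intro prod.cong) (auto simp: algebra_simps simp flip: power_add)
  also have "\<dots> = fps_X ^ (\<Sum>i<r. i) * (\<Prod>i<r. 1 + fps_X ^ (r - i))"
    by (simp add: prod.distrib power_sum)
  also have "(\<Prod>i<r. 1 + fps_X ^ (r - i) :: rat fps) = Qn r"
    unfolding Qn_alt using prod.nat_diff_reindex[of "\<lambda>i. 1 + fps_X ^ Suc i :: rat fps" r]
    by (simp add: Suc_diff_Suc)
  also have "?f r = 2 * fps_X ^ r" by simp
  finally have "(\<Prod>i<2*r+2. ?f i) = 2 * fps_X ^ ((\<Sum>i<r. i) + r + r * Suc r) * Qn r * Qn (Suc r)"
    by (simp add: power_add algebra_simps)
  moreover have "(\<Sum>i<r. i) + r + r * Suc r = 3 * tri r"
    using sum_lt_double[of r] tri2[of r] by (cases r) (simp_all add: algebra_simps)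
  ultimately show ?thesis by simp
qed


lemma even_pred: "even (n * (n - 1 :: nat))" by (cases n) simp_all
lemma two_half: "even (x::nat) \<Longrightarrow> 2 * (x div 2) = x" by simp

lemma tri_rhs: "2 * (3 * tri r + tri j) = 3 * (r * (r + 1)) + j * (j + 1)"
  by (simp only: tri2[symmetric]) simp

lemma expo_a:
  assumes "j \<le> r"
  shows "(r - j) * (r - j - 1) div 2 + r * (2*r+2 - (r - j)) = 3 * tri r + tri j"
proof -
  obtain s where r: "r = j + s" using assms le_Suc_ex by blast
  have h1: "r - j = s" using r by simp
  have h3: "2*r+2 - s = 2*j + s + 2" using r by simp
  have h2: "2 * (s * (s - 1) div 2) = s * (s - 1)" using even_pred[of s] by simp
  have key: "s * (s - 1) + 2 * (r * (2*j + s + 2)) = 3 * (r * (r + 1)) + j * (j + 1)"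
  proof (cases s)
    case 0 then show ?thesis using r by (simp add: algebra_simps)
  next
    case (Suc s')
    then have "s = s' + 1" by simp
    then show ?thesis using r by (simp add: algebra_simps)
  qed
  have "2 * (s * (s - 1) div 2 + r * (2*j + s + 2)) = 2 * (s * (s - 1) div 2) + 2 * (r * (2*j + s + 2))"
    by (rule distrib_left)
  also have "\<dots> = s * (s - 1) + 2 * (r * (2*j + s + 2))" by (simp only: h2)
  also have "\<dots> = 3 * (r * (r + 1)) + j * (j + 1)" by (rule key)
  also have "\<dots> = 2 * (3 * tri r + tri j)" by (rule tri_rhs[symmetric])
  finally have "2 * (s * (s - 1) div 2 + r * (2*j + s + 2)) = 2 * (3 * tri r + tri j)" .
  then show ?thesis unfolding h1 h3 by simp
qed

lemma expo_b:
  assumes "j \<le> r + 1"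
  shows "(j + (r+1)) * (j + (r+1) - 1) div 2 + r * (2*r+2 - (j + (r+1))) = 3 * tri r + tri j"
proof -
  have h0: "j + (r+1) - 1 = j + r" by simp
  have h2: "2 * ((j + (r + 1)) * (j + r) div 2) = (j + (r + 1)) * (j + r)"
    using even_consec[of "j + r"] by (simp add: algebra_simps)
  obtain t where t: "r + 1 = j + t" using assms le_Suc_ex by blast
  have h3: "2*r+2 - (j + (r+1)) = t" using t by simp
  have key: "(j + (r + 1)) * (j + r) + 2 * (r * t) = 3 * (r * (r + 1)) + j * (j + 1)"
  proof (cases t)
    case 0
    then have "j = r + 1" using t by simp
    then show ?thesis using 0 by (simp add: algebra_simps)
  next
    case (Suc u)
    then have "r = j + u" "t = u + 1" using t by simp_all
    then show ?thesis by (simp add: algebra_simps)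
  qed
  have "2 * ((j + (r + 1)) * (j + r) div 2 + r * t) = 2 * ((j + (r + 1)) * (j + r) div 2) + 2 * (r * t)"
    by (rule distrib_left)
  also have "\<dots> = (j + (r + 1)) * (j + r) + 2 * (r * t)" by (simp only: h2)
  also have "\<dots> = 3 * (r * (r + 1)) + j * (j + 1)" by (rule key)
  also have "\<dots> = 2 * (3 * tri r + tri j)" by (rule tri_rhs[symmetric])
  finally have "2 * ((j + (r + 1)) * (j + r) div 2 + r * t) = 2 * (3 * tri r + tri j)" .
  then show ?thesis unfolding h0 h3 by simp
qed

lemma rhs_split:
  "(\<Sum>k=0..2*r+2. gb (2*r+2) k * fps_X ^ (k * (k - 1) div 2 + r * (2*r+2 - k)))
     = fps_X ^ (3 * tri r) * ((\<Sum>j<Suc r. gb (2*r+2) (r - j) * fps_X ^ tri j)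
                           + (\<Sum>j<r+2. gb (2*r+2) (j + (r+1)) * fps_X ^ tri j))"
proof -
  define g where "g = (\<lambda>k. gb (2*r+2) k * fps_X ^ (k * (k - 1) div 2 + r * (2*r+2 - k)) :: rat fps)"
  have "(\<Sum>k=0..2*r+2. g k) = (\<Sum>k\<in>{0..<Suc (2*r+2)}. g k)"
    by (simp only: atLeastLessThanSuc_atLeastAtMost)
  also have "\<dots> = (\<Sum>k\<in>{0..<Suc r}. g k) + (\<Sum>k\<in>{Suc r..<Suc (2*r+2)}. g k)"
    by (rule sum.atLeastLessThan_concat[symmetric]) simp_all
  also have "(\<Sum>k\<in>{0..<Suc r}. g k) = (\<Sum>j<Suc r. g (r - j))"
    using sum.nat_diff_reindex[of g "Suc r"] by (simp add: atLeast0LessThan)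
  also have "(\<Sum>k\<in>{Suc r..<Suc (2*r+2)}. g k) = (\<Sum>k\<in>{0+(r+1)..<(r+2)+(r+1)}. g k)"
    by (rule arg_cong[where f="sum g"]) auto
  also have "\<dots> = (\<Sum>j\<in>{0..<r+2}. g (j + (r+1)))"
    by (rule sum.shift_bounds_nat_ivl)
  also have "(\<Sum>j<Suc r. g (r - j)) = fps_X ^ (3 * tri r) * (\<Sum>j<Suc r. gb (2*r+2) (r - j) * fps_X ^ tri j)"
    unfolding sum_distrib_left
  proof (intro sum.cong refl)
    fix j assume "j \<in> {..<Suc r}"
    then have "j \<le> r" by simp
    from expo_a[OF this] show "g (r - j) = fps_X ^ (3 * tri r) * (gb (2 * r + 2) (r - j) * fps_X ^ tri j)"
      unfolding g_def by (simp only: power_add) (simp add: algebra_simps)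
  qed
  also have "(\<Sum>j\<in>{0..<r+2}. g (j + (r+1))) = fps_X ^ (3 * tri r) * (\<Sum>j<r+2. gb (2*r+2) (j + (r+1)) * fps_X ^ tri j)"
    unfolding sum_distrib_left atLeast0LessThan
  proof (intro sum.cong refl)
    fix j assume "j \<in> {..<r+2}"
    then have "j \<le> r + 1" by simp
    from expo_b[OF this] show "g (j + (r + 1)) = fps_X ^ (3 * tri r) * (gb (2 * r + 2) (j + (r + 1)) * fps_X ^ tri j)"
      unfolding g_def by (simp add: power_add algebra_simps)
  qed
  finally show ?thesis unfolding g_def by (simp add: distrib_left)
qed

lemma fin_gauss:
  "2 * Qn r * Qn (Suc r) = (\<Sum>j<Suc r. gb (2*r+2) (r - j) * fps_X ^ tri j)
                           + (\<Sum>j<r+2. gb (2*r+2) (j + (r+1)) * fps_X ^ tri j)"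
proof -
  have "fps_X ^ (3 * tri r) * (2 * Qn r * Qn (Suc r)) = 2 * fps_X ^ (3 * tri r) * Qn r * Qn (Suc r)"
    by (simp add: algebra_simps)
  also have "\<dots> = (\<Prod>i<2*r+2. fps_X ^ r + fps_X ^ i :: rat fps)" by (rule lhs_prod[symmetric])
  also have "\<dots> = (\<Sum>k=0..2*r+2. gb (2*r+2) k * fps_X ^ (k * (k - 1) div 2 + r * (2*r+2 - k)))"
    by (rule qbinom)
  also have "\<dots> = fps_X ^ (3 * tri r) * ((\<Sum>j<Suc r. gb (2*r+2) (r - j) * fps_X ^ tri j)
                           + (\<Sum>j<r+2. gb (2*r+2) (j + (r+1)) * fps_X ^ tri j))"
    by (rule rhs_split)
  finally show ?thesis by simp
qed


lemmas [trans] = eqm_trans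

lemma term_bound:
  assumes "k \<le> m" "j < N \<Longrightarrow> N \<le> min k (m - k) + 1"
  shows "N \<le> tri j \<or> eqm N (gb m k * E) 1"
proof (cases "j < N")
  case True
  then show ?thesis using eqm_mono[OF gb_eqm[OF assms(1)] assms(2)] by blast
next
  case False
  then show ?thesis using tri_ge[of j] by simp
qed

lemma gauss: "psi * E = (dil 2 E)^2"
proof -
  have "eqm N (2 * (dil 2 E)^2) (E * (psi + psi))" for N
  proof -
    define r where "r = N + N"
    define S1 where "S1 = (\<Sum>j<Suc r. gb (2*r+2) (r - j) * fps_X ^ tri j)"
    define S2 where "S2 = (\<Sum>j<r+2. gb (2*r+2) (j + (r+1)) * fps_X ^ tri j)"
    have fin: "2 * Qn r * Qn (Suc r) = S1 + S2" unfolding S1_def S2_def by (rule fin_gauss)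
    have q1: "eqm N (Qn r * E) (dil 2 E)" by (rule eqm_mono[OF QE_eqm]) (simp add: r_def)
    have q2: "eqm N (Qn (Suc r) * E) (dil 2 E)" by (rule eqm_mono[OF QE_eqm]) (simp add: r_def)
    have "eqm N (2 * ((Qn r * E) * (Qn (Suc r) * E))) (2 * (dil 2 E * dil 2 E))"
      by (intro eqm_mult eqm_refl q1 q2)
    moreover have "2 * ((Qn r * E) * (Qn (Suc r) * E)) = E * (E * (2 * Qn r * Qn (Suc r)))"
      by (simp only: ac_simps)
    moreover note fin
    ultimately have A: "eqm N (E * (E * (S1 + S2))) (2 * (dil 2 E)^2)"
      by (simp only: power2_eq_square)
    have s1: "eqm N (E * S1) psi"
    proof -
      have "eqm N (E * S1) (\<Sum>j<Suc r. fps_X ^ tri j)"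
        unfolding S1_def sum_distrib_left
      proof (rule eqm_sum, rule term_eqm, rule term_bound)
        fix j assume "j \<in> {..<Suc r}"
        then show "r - j \<le> 2 * r + 2" by simp
        show "j < N \<Longrightarrow> N \<le> min (r - j) (2 * r + 2 - (r - j)) + 1" by (simp add: r_def)
      qed
      also have "eqm N \<dots> psi" by (rule sum_tri_psi) (simp add: r_def)
      finally show ?thesis .
    qed
    have s2: "eqm N (E * S2) psi"
    proof -
      have "eqm N (E * S2) (\<Sum>j<r+2. fps_X ^ tri j)"
        unfolding S2_def sum_distrib_left
      proof (rule eqm_sum, rule term_eqm, rule term_bound)
        fix j assume "j \<in> {..<r+2}"
        then show "j + (r + 1) \<le> 2 * r + 2" by simp
        show "j < N \<Longrightarrow> N \<le> min (j + (r + 1)) (2 * r + 2 - (j + (r + 1))) + 1" by (simp add: r_def)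
      qed
      also have "eqm N \<dots> psi" by (rule sum_tri_psi) (simp add: r_def)
      finally show ?thesis .
    qed
    have "eqm N (E * (E * (S1 + S2))) (E * (psi + psi))"
      unfolding distrib_left[of E S1 S2] by (intro eqm_mult eqm_refl eqm_add[OF s1 s2])
    then show ?thesis using A eqm_trans eqm_sym by blast
  qed
  then have "2 * (dil 2 E)^2 = E * (psi + psi)" by (rule eqm_all)
  also have "E * (psi + psi) = 2 * (psi * E)" unfolding mult_2 distrib_left by (simp add: mult.commute)
  finally have h: "2 * (dil 2 E)^2 = 2 * (psi * E)" .
  show ?thesis
  proof (rule fps_ext)
    fix n
    have "(2 * (dil 2 E)^2) $ n = (2 * (psi * E)) $ n" using h by simp
    then show "(psi * E) $ n = ((dil 2 E)^2) $ n" by (simp add: numeral_fps_const)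
  qed
qed


section \<open>The involution\<close>

definition S :: "nat \<Rightarrow> (int \<times> int) set" where
  "S n = {(x, y). 0 < x \<and> 0 < y \<and> odd x \<and> odd y \<and> x^2 + 3 * y^2 = 8 * int n + 4}"

definition tau :: "int \<times> int \<Rightarrow> int \<times> int" where
  "tau z = (case z of (x, y) \<Rightarrow> if 4 dvd (x - y) then (\<bar>x - 3 * y\<bar> div 2, (x + y) div 2)
                                  else ((x + 3 * y) div 2, \<bar>x - y\<bar> div 2))"

lemma norm1: "(x - 3 * y) = 2 * u \<Longrightarrow> x + y = 2 * v \<Longrightarrow> u^2 + 3 * v^2 = x^2 + 3 * (y::int)^2"
proof -
  assume h: "(x - 3 * y) = 2 * u" "x + y = 2 * v"
  have "4 * (u^2 + 3 * v^2) = (2 * u)^2 + 3 * (2 * v)^2" by (simp add: power2_eq_square algebra_simps)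
  also have "\<dots> = (x - 3 * y)^2 + 3 * (x + y)^2" by (simp only: h)
  also have "\<dots> = 4 * (x^2 + 3 * y^2)" by (simp add: power2_eq_square algebra_simps)
  finally show ?thesis by simp
qed

lemma norm2: "(x + 3 * y) = 2 * u \<Longrightarrow> x - y = 2 * w \<Longrightarrow> u^2 + 3 * w^2 = x^2 + 3 * (y::int)^2"
proof -
  assume h: "(x + 3 * y) = 2 * u" "x - y = 2 * w"
  have "4 * (u^2 + 3 * w^2) = (2 * u)^2 + 3 * (2 * w)^2" by (simp add: power2_eq_square algebra_simps)
  also have "\<dots> = (x + 3 * y)^2 + 3 * (x - y)^2" by (simp only: h)
  also have "\<dots> = 4 * (x^2 + 3 * y^2)" by (simp add: power2_eq_square algebra_simps)
  finally show ?thesis by simp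
qed

lemma tau_S:
  assumes "(x, y) \<in> S n"
  shows "tau (x, y) \<in> S n \<and> tau (tau (x, y)) = (x, y) \<and> (tau (x, y) = (x, y) \<longleftrightarrow> x = y \<or> x = 3 * y)"
proof -
  have x: "0 < x" "odd x" and y: "0 < y" "odd y" and nrm: "x^2 + 3 * y^2 = 8 * int n + 4"
    using assms by (auto simp: S_def)
  show ?thesis
  proof (cases "4 dvd (x - y)")
    case True
    then obtain k where k: "x - y = 4 * k" by (auto elim: dvdE)
    define u where "u = 2 * k - y"
    define v where "v = 2 * k + y"
    have hu: "x - 3 * y = 2 * u" and hv: "x + y = 2 * v" using k by (simp_all add: u_def v_def)
    have t: "tau (x, y) = (\<bar>u\<bar>, v)" using True hu hv by (simp add: tau_def abs_mult)
    have u_odd: "odd u" using y(2) by (simp add: u_def)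
    have v_odd: "odd v" using y(2) by (simp add: v_def)
    have u0: "u \<noteq> 0" using u_odd by auto
    have v0: "0 < v" using hv x y by simp
    have n1: "\<bar>u\<bar>^2 + 3 * v^2 = x^2 + 3 * y^2" using norm1[OF hu hv] by simp
    have inS: "tau (x, y) \<in> S n" unfolding t S_def using u0 v0 u_odd v_odd n1 nrm by auto
    have bk: "tau (\<bar>u\<bar>, v) = (x, y)"
    proof (cases "0 \<le> u")
      case True
      have "\<not> 4 dvd (u - v)" using y(2) by (simp add: u_def v_def) presburger
      moreover have "u + 3 * v = 2 * x" using k by (simp add: u_def v_def)
      moreover have "\<bar>u - v\<bar> = 2 * y" using y(1) by (simp add: u_def v_def)
      ultimately show ?thesis using True by (simp add: tau_def)
    next
      case False
      have "4 dvd (- u - v)" by (simp add: u_def v_def)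
      moreover have "\<bar>- u - 3 * v\<bar> = 2 * x" using k x(1) by (simp add: u_def v_def)
      moreover have "- u + v = 2 * y" by (simp add: u_def v_def)
      ultimately show ?thesis using False by (simp add: tau_def)
    qed
    have fix_iff: "tau (x, y) = (x, y) \<longleftrightarrow> x = y \<or> x = 3 * y"
    proof
      assume "tau (x, y) = (x, y)"
      then have "v = y" using t by simp
      then show "x = y \<or> x = 3 * y" using k by (simp add: v_def)
    next
      assume "x = y \<or> x = 3 * y"
      moreover have "x \<noteq> 3 * y" using k y(2) by presburger
      ultimately have "x = y" by blast
      then have "k = 0" using k by simp
      then show "tau (x, y) = (x, y)" using t \<open>x = y\<close> y(1) by (simp add: u_def v_def)
    qed
    show ?thesis using inS bk fix_iff t by simp
  next
    case False
    have "even (x - y)" using x(2) y(2) by simp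
    then obtain w where w: "x - y = 2 * w" unfolding dvd_def by blast
    define u where "u = w + 2 * y"
    have hu: "x + 3 * y = 2 * u" using w by (simp add: u_def)
    have w_odd: "odd w" using False w by presburger
    have t: "tau (x, y) = (u, \<bar>w\<bar>)" using False hu w by (simp add: tau_def abs_mult)
    have u_odd: "odd u" using w_odd by (simp add: u_def)
    have w0: "w \<noteq> 0" using w_odd by auto
    have u0: "0 < u" using hu x y by simp
    have n1: "u^2 + 3 * \<bar>w\<bar>^2 = x^2 + 3 * y^2" using norm2[OF hu w] by simp
    have inS: "tau (x, y) \<in> S n" unfolding t S_def using u0 w0 u_odd w_odd n1 nrm by auto
    have bk: "tau (u, \<bar>w\<bar>) = (x, y)"
    proof (cases "0 \<le> w")
      case True
      have "\<not> 4 dvd (u - w)" using y(2) by (simp add: u_def) presburger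
      moreover have "u + 3 * w = 2 * x" using w by (simp add: u_def)
      moreover have "\<bar>u - w\<bar> = 2 * y" using y(1) by (simp add: u_def)
      ultimately show ?thesis using True by (simp add: tau_def)
    next
      case False
      have "4 dvd (u + w)" using w_odd y(2) by (simp add: u_def) presburger
      moreover have "\<bar>u + 3 * w\<bar> = 2 * x" using w x(1) by (simp add: u_def)
      moreover have "u - w = 2 * y" by (simp add: u_def)
      ultimately show ?thesis using False by (simp add: tau_def)
    qed
    have fix_iff: "tau (x, y) = (x, y) \<longleftrightarrow> x = y \<or> x = 3 * y"
    proof
      assume "tau (x, y) = (x, y)"
      then have "u = x" using t by simp
      then show "x = y \<or> x = 3 * y" using w by (simp add: u_def)
    next
      assume "x = y \<or> x = 3 * y"
      moreover have "x \<noteq> y" using False by auto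
      ultimately have "x = 3 * y" by blast
      then show "tau (x, y) = (x, y)" using t w y(1) by (simp add: u_def)
    qed
    show ?thesis using inS bk fix_iff t by simp
  qed
qed


lemma inv_even:
  assumes "finite B" "\<forall>z\<in>B. f z \<in> B \<and> f (f z) = z \<and> f z \<noteq> z"
  shows "even (card B)"
  using assms
proof (induction "card B" arbitrary: B rule: less_induct)
  case less
  show ?case
  proof (cases "B = {}")
    case True then show ?thesis by simp
  next
    case False
    then obtain z where z: "z \<in> B" by blast
    have fz: "f z \<in> B" "f z \<noteq> z" "f (f z) = z" using less.prems(2) z by auto
    define B' where "B' = B - {z, f z}"
    have cB: "card B = card B' + 2"
    proof -
      have "card B' = card B - card {z, f z}" unfolding B'_def
        using z fz less.prems(1) by (intro card_Diff_subset) auto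
      moreover have "card {z, f z} = 2" using fz by simp
      moreover have "card {z, f z} \<le> card B" using z fz less.prems(1) by (intro card_mono) auto
      ultimately show ?thesis by simp
    qed
    have "\<forall>w\<in>B'. f w \<in> B' \<and> f (f w) = w \<and> f w \<noteq> w"
    proof
      fix w assume w: "w \<in> B'"
      then have wB: "w \<in> B" "w \<noteq> z" "w \<noteq> f z" by (auto simp: B'_def)
      have p: "f w \<in> B" "f (f w) = w" "f w \<noteq> w" using less.prems(2) wB(1) by auto
      have "f w \<noteq> z" using p(2) wB(3) by auto
      moreover have "f w \<noteq> f z" using p(2) fz(3) wB(2) by metis
      ultimately show "f w \<in> B' \<and> f (f w) = w \<and> f w \<noteq> w" using p by (simp add: B'_def)
    qed
    moreover have "finite B'" using less.prems(1) by (simp add: B'_def)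
    ultimately have "even (card B')" using less.hyps cB by simp
    then show ?thesis using cB by simp
  qed
qed

lemma inv_parity:
  assumes "finite A" "\<forall>z\<in>A. f z \<in> A \<and> f (f z) = z"
  shows "(of_nat (card A) - of_nat (card {z\<in>A. f z = z}) :: rat) / 2 \<in> \<int>"
proof -
  let ?F = "{z\<in>A. f z = z}" and ?B = "{z\<in>A. f z \<noteq> z}"
  have "A = ?F \<union> ?B" by auto
  then have "card A = card ?F + card ?B" using assms(1)
    by (metis (no_types, lifting) card_Un_disjoint disjoint_iff finite_Un mem_Collect_eq)
  moreover have "even (card ?B)"
    using assms by (intro inv_even[of _ f]) auto
  then obtain k where "card ?B = 2 * k" by (auto elim: evenE)
  ultimately have "(of_nat (card A) - of_nat (card ?F) :: rat) / 2 = of_nat k" by simp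
  then show ?thesis by simp
qed

lemma S_finite: "finite (S n)"
proof -
  have "S n \<subseteq> {0..int (8*n+4)} \<times> {0..int (8*n+4)}"
  proof
    fix z assume "z \<in> S n"
    then obtain x y where z: "z = (x, y)" "0 < x" "0 < y" "x^2 + 3 * y^2 = 8 * int n + 4"
      by (auto simp: S_def)
    have "x \<le> x^2" "y \<le> y^2" using z by (simp_all add: power2_eq_square)
    then show "z \<in> {0..int (8*n+4)} \<times> {0..int (8*n+4)}" using z by auto
  qed
  then show ?thesis by (rule finite_subset) simp
qed

lemma sq_odd: "(2 * int a + 1)^2 = 8 * int (tri a) + 1"
proof -
  have "int (2 * tri a) = int (a * (a + 1))" by (simp only: tri2)
  then have "2 * int (tri a) = int a * (int a + 1)" by (simp add: algebra_simps)
  then show ?thesis by (simp add: power2_eq_square algebra_simps)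
qed

lemma odd_pos_int: "odd (x::int) \<Longrightarrow> 0 < x \<Longrightarrow> \<exists>a. x = 2 * int a + 1"
proof -
  assume "odd x" "0 < x"
  then obtain c where c: "x = 2 * c + 1" by (auto elim: oddE)
  then have "0 \<le> c" using \<open>0 < x\<close> by simp
  then show ?thesis using c by (intro exI[of _ "nat c"]) simp
qed

definition P :: "nat \<Rightarrow> (nat \<times> nat) set" where "P n = {(a, b). tri a + 3 * tri b = n}"

lemma S_P: "S n = (\<lambda>(a, b). (2 * int a + 1, 2 * int b + 1)) ` P n"
proof (intro equalityI subsetI)
  fix z assume "z \<in> S n"
  then obtain x y where z: "z = (x, y)" "0 < x" "0 < y" "odd x" "odd y" "x^2 + 3 * y^2 = 8 * int n + 4"
    by (auto simp: S_def)
  obtain a b where ab: "x = 2 * int a + 1" "y = 2 * int b + 1" using odd_pos_int z by metis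
  have "8 * int (tri a) + 1 + 3 * (8 * int (tri b) + 1) = 8 * int n + 4"
    using z(6) unfolding ab sq_odd by simp
  then have "tri a + 3 * tri b = n" by simp
  then show "z \<in> (\<lambda>(a, b). (2 * int a + 1, 2 * int b + 1)) ` P n"
    using z(1) ab by (auto simp: P_def image_iff)
next
  fix z assume "z \<in> (\<lambda>(a, b). (2 * int a + 1, 2 * int b + 1)) ` P n"
  then obtain a b where z: "z = (2 * int a + 1, 2 * int b + 1)" "tri a + 3 * tri b = n"
    by (auto simp: P_def)
  have "(2 * int a + 1)^2 + 3 * (2 * int b + 1)^2 = 8 * int n + 4"
    unfolding sq_odd using z(2) by (simp add: algebra_simps flip: z(2))
  then show "z \<in> S n" using z(1) by (simp add: S_def)
qed

lemma card_S_P: "card (S n) = card (P n)"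
  unfolding S_P by (rule card_image) (auto simp: inj_on_def)

lemma coeff_D: "(psi * dil 3 psi) $ n = of_nat (card (P n))"
proof -
  define T where "T = {i\<in>{0..n}. (\<exists>a. i = tri a) \<and> (\<exists>b. n - i = 3 * tri b)}"
  have "(psi * dil 3 psi) $ n = (\<Sum>i=0..n. if (\<exists>a. i = tri a) \<and> (\<exists>b. n - i = 3 * tri b) then 1 else 0)"
    unfolding fps_mult_nth
  proof (intro sum.cong refl)
    fix i
    have "(\<exists>b. (n - i) div 3 = tri b) \<and> 3 dvd (n - i) \<longleftrightarrow> (\<exists>b. n - i = 3 * tri b)" by (auto elim!: dvdE)
    then show "psi $ i * dil 3 psi $ (n - i) = (if (\<exists>a. i = tri a) \<and> (\<exists>b. n - i = 3 * tri b) then 1 else 0)"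
      by (auto simp: psi_def dil_nth)
  qed
  also have "\<dots> = of_nat (card T)"
    unfolding T_def by (simp add: sum.If_cases Int_def conj_commute)
  also have "card T = card (P n)"
  proof -
    have "bij_betw (\<lambda>(a, b). tri a) (P n) T"
      unfolding bij_betw_def
    proof
      show "inj_on (\<lambda>(a, b). tri a) (P n)"
        by (auto simp: inj_on_def P_def tri_inj)
      show "(\<lambda>(a, b). tri a) ` P n = T"
        by (auto simp: P_def T_def image_iff) (metis le_add_diff_inverse)
    qed
    then show ?thesis by (simp add: bij_betw_same_card)
  qed
  finally show ?thesis .
qed


lemma F1_card: "card {z \<in> S n. fst z = snd z} = (if \<exists>a. n = 4 * tri a then 1 else 0)"
proof (cases "\<exists>a. n = 4 * tri a")
  case True
  then obtain a where a: "n = 4 * tri a" by blast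
  have "{z \<in> S n. fst z = snd z} = {(2 * int a + 1, 2 * int a + 1)}"
  proof (intro equalityI subsetI)
    fix z assume "z \<in> {z \<in> S n. fst z = snd z}"
    then obtain x where z: "z = (x, x)" "0 < x" "x^2 + 3 * x^2 = 8 * int n + 4"
      by (auto simp: S_def)
    have "x^2 = (2 * int a + 1)^2" using z(3) unfolding sq_odd a by simp
    then have "x = 2 * int a + 1" using z(2) by (simp add: power2_eq_iff_nonneg)
    then show "z \<in> {(2 * int a + 1, 2 * int a + 1)}" using z by simp
  next
    fix z assume "z \<in> {(2 * int a + 1, 2 * int a + 1)}"
    then have z: "z = (2 * int a + 1, 2 * int a + 1)" by simp
    have "(2 * int a + 1)^2 + 3 * (2 * int a + 1)^2 = 8 * int n + 4"
      unfolding sq_odd a by simp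
    then show "z \<in> {z \<in> S n. fst z = snd z}" using z by (simp add: S_def)
  qed
  then show ?thesis using True by simp
next
  case False
  have "{z \<in> S n. fst z = snd z} = {}"
  proof (rule ccontr)
    assume "{z \<in> S n. fst z = snd z} \<noteq> {}"
    then obtain x where z: "0 < x" "odd x" "x^2 + 3 * x^2 = 8 * int n + 4"
      by (auto simp: S_def)
    obtain a where "x = 2 * int a + 1" using odd_pos_int z by blast
    then have "4 * (8 * int (tri a) + 1) = 8 * int n + 4" using z(3) sq_odd[of a] by simp
    then have "n = 4 * tri a" by simp
    then show False using False by blast
  qed
  then show ?thesis using False by (simp only: card.empty) simp
qed

lemma F2_card: "card {z \<in> S n. fst z = 3 * snd z} = (if \<exists>b. n = 12 * tri b + 1 then 1 else 0)"
proof (cases "\<exists>b. n = 12 * tri b + 1")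
  case True
  then obtain b where b: "n = 12 * tri b + 1" by blast
  have "{z \<in> S n. fst z = 3 * snd z} = {(3 * (2 * int b + 1), 2 * int b + 1)}"
  proof (intro equalityI subsetI)
    fix z assume "z \<in> {z \<in> S n. fst z = 3 * snd z}"
    then obtain y where z: "z = (3 * y, y)" "0 < y" "(3 * y)^2 + 3 * y^2 = 8 * int n + 4"
      by (auto simp: S_def)
    have "12 * y^2 = 12 * (2 * int b + 1)^2" using z(3) unfolding sq_odd b
      by (simp add: power_mult_distrib)
    then have "y = 2 * int b + 1" using z(2) by (simp add: power2_eq_iff_nonneg)
    then show "z \<in> {(3 * (2 * int b + 1), 2 * int b + 1)}" using z by simp
  next
    fix z assume "z \<in> {(3 * (2 * int b + 1), 2 * int b + 1)}"
    then have z: "z = (3 * (2 * int b + 1), 2 * int b + 1)" by simp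
    have "(3 * (2 * int b + 1))^2 + 3 * (2 * int b + 1)^2 = 8 * int n + 4"
      unfolding power_mult_distrib sq_odd b by simp
    then show "z \<in> {z \<in> S n. fst z = 3 * snd z}" using z by (simp add: S_def)
  qed
  then show ?thesis using True by simp
next
  case False
  have "{z \<in> S n. fst z = 3 * snd z} = {}"
  proof (rule ccontr)
    assume "{z \<in> S n. fst z = 3 * snd z} \<noteq> {}"
    then obtain y where z: "0 < y" "odd y" "(3 * y)^2 + 3 * y^2 = 8 * int n + 4"
      by (auto simp: S_def)
    obtain b where yb: "y = 2 * int b + 1" using odd_pos_int z by blast
    have h1: "12 * y^2 = 8 * int n + 4" using z(3) by (simp add: power_mult_distrib)
    have h2: "y^2 = 8 * int (tri b) + 1" unfolding yb by (rule sq_odd)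
    have "12 * (8 * int (tri b) + 1) = 8 * int n + 4" using h1 unfolding h2 .
    then have "n = 12 * tri b + 1" by presburger
    then show False using False by blast
  qed
  then show ?thesis using False by (simp only: card.empty) simp
qed

lemma fix_card: "card {z \<in> S n. tau z = z} =
   (if \<exists>a. n = 4 * tri a then 1 else 0) + (if \<exists>b. n = 12 * tri b + 1 then 1 else 0)"
proof -
  have "{z \<in> S n. tau z = z} = {z \<in> S n. fst z = snd z} \<union> {z \<in> S n. fst z = 3 * snd z}"
    using tau_S by fastforce
  moreover have "{z \<in> S n. fst z = snd z} \<inter> {z \<in> S n. fst z = 3 * snd z} = {}"
    by (auto simp: S_def)
  moreover have "finite {z \<in> S n. fst z = snd z}" "finite {z \<in> S n. fst z = 3 * snd z}"
    using S_finite by auto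
  ultimately show ?thesis by (simp add: card_Un_disjoint F1_card F2_card)
qed

lemma coeff_R: "(dil 4 psi + fps_X * dil 12 psi) $ n =
   (if \<exists>a. n = 4 * tri a then 1 else 0) + (if \<exists>b. n = 12 * tri b + 1 then 1 else 0)"
proof -
  have "dil 4 psi $ n = (if \<exists>a. n = 4 * tri a then 1 else 0)"
    by (auto simp: dil_nth psi_def elim!: dvdE)
  moreover have "(fps_X * dil 12 psi) $ n = (if \<exists>b. n = 12 * tri b + 1 then 1 else 0)"
  proof (cases n)
    case 0 then show ?thesis by simp
  next
    case (Suc m)
    have "dil 12 psi $ m = (if \<exists>b. m = 12 * tri b then 1 else 0)"
      by (auto simp: dil_nth psi_def elim!: dvdE)
    then show ?thesis using Suc by simp
  qed
  ultimately show ?thesis by simp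
qed

lemma isint_psi[simp]: "isint psi" by (simp add: isint_def psi_def)
lemma psi0[simp]: "psi $ 0 = 1" by (auto simp: psi_def tri_def intro: exI[of _ 0])

lemma D_cong: "fcong 2 (psi * dil 3 psi) (dil 4 psi + fps_X * dil 12 psi)"
proof (rule fcong_coeffI)
  show "isint (psi * dil 3 psi)" "isint (dil 4 psi + fps_X * dil 12 psi)" by simp_all
  fix n
  have "card (S n) = card (P n)" by (rule card_S_P)
  have "\<forall>z\<in>S n. tau z \<in> S n \<and> tau (tau z) = z" using tau_S by auto
  note ip = inv_parity[OF S_finite this]
  have e1: "(psi * dil 3 psi) $ n = of_nat (card (S n))" by (simp add: coeff_D card_S_P)
  have e2: "(dil 4 psi + fps_X * dil 12 psi) $ n = of_nat (card {z \<in> S n. tau z = z})"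
    unfolding coeff_R fix_card by simp
  show "((psi * dil 3 psi) $ n - (dil 4 psi + fps_X * dil 12 psi) $ n) / 2 \<in> \<int>"
    unfolding e1 e2 by (rule ip)
qed simp


section \<open>Number theory\<close>

lemma p_facts:
  fixes p :: nat
  assumes "prime p" "p \<ge> 5"
  shows "odd p" "\<not> p dvd 8" "8 dvd p ^ (2*k+2) - 1" "p ^ (2*k+2) \<ge> 1"
proof -
  show op: "odd p" using assms by (intro prime_odd_nat) auto
  show "\<not> p dvd 8"
  proof
    assume "p dvd 8"
    then have "p dvd 2 ^ 3" by simp
    then have "p dvd 2" using assms(1) prime_dvd_power by blast
    then have "p \<le> 2" by (simp add: dvd_imp_le)
    then show False using assms(2) by simp
  qed
  show "p ^ (2*k+2) \<ge> 1" using assms by simp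
  obtain q where q: "p = 2 * q + 1" using op by (auto elim: oddE)
  have "p^2 = 4 * (q * (q + 1)) + 1" unfolding q by (simp add: power2_eq_square algebra_simps)
  moreover have "even (q * (q + 1))" by simp
  then obtain r where "q * (q + 1) = 2 * r" unfolding dvd_def by blast
  ultimately have "p^2 = 8 * r + 1" by simp
  then have "p^2 mod 8 = 1" by simp
  then have "(p^2 mod 8)^(k+1) mod 8 = 1" by simp
  then have "(p^2)^(k+1) mod 8 = 1" by (simp only: power_mod)
  moreover have "p ^ (2*k+2) = (p^2)^(k+1)"
  proof -
    have "2*k+2 = 2*(k+1)" by simp
    then show ?thesis by (simp only: power_mult)
  qed
  ultimately have "p ^ (2*k+2) mod 8 = 1" by simp
  then show "8 dvd p ^ (2*k+2) - 1"
    using dvd_minus_mod[of 8 "p ^ (2*k+2)"] by simp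
qed

lemma not_tri:
  fixes p m k :: nat
  assumes "prime p" "p \<ge> 5" "\<not> p dvd m"
  shows "\<not> (\<exists>j. p ^ (2*k+1) * m + (p ^ (2*k+2) - 1) div 8 = tri j)"
proof
  assume "\<exists>j. p ^ (2*k+1) * m + (p ^ (2*k+2) - 1) div 8 = tri j"
  then obtain j where j: "p ^ (2*k+1) * m + (p ^ (2*k+2) - 1) div 8 = tri j" by blast
  have pf: "\<not> p dvd 8" "8 dvd p ^ (2*k+2) - 1" "p ^ (2*k+2) \<ge> 1"
    using p_facts(2)[OF assms(1,2)] p_facts(3,4)[OF assms(1,2), of k] by auto
  define A where "A = p ^ (2*k+1)"
  define B where "B = p ^ (2*k+2)"
  define d where "d = (B - 1) div 8"
  have AB: "B = A * p" unfolding A_def B_def by simp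
  have "8 * d = B - 1" unfolding d_def B_def using pf(2) by simp
  then have d8: "8 * d + 1 = B" using pf(3) unfolding B_def by simp
  have "8 * tri j + 1 = 8 * (A * m) + (8 * d + 1)"
    unfolding j[symmetric] A_def d_def B_def by simp
  also have "\<dots> = A * (8 * m + p)" unfolding d8 AB by (simp add: algebra_simps)
  finally have "8 * tri j + 1 = p ^ (2*k+1) * (8 * m + p)" unfolding A_def .
  moreover have "8 * tri j + 1 = (2 * j + 1)^2"
    using tri2[of j] by (simp add: power2_eq_square algebra_simps)
  ultimately have eq: "(2 * j + 1)^2 = p ^ (2*k+1) * (8 * m + p)" by simp
  have pe: "prime_elem p" using assms(1) by simp
  have nd: "\<not> p dvd (8 * m + p)"
  proof
    assume "p dvd 8 * m + p"
    then have "p dvd 8 * m" by (simp add: dvd_add_left_iff)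
    then show False using pf(1) assms(1,3) by (simp add: prime_dvd_mult_iff)
  qed
  have "multiplicity p ((2 * j + 1)^2) = 2 * multiplicity p (2 * j + 1)"
    using pe by (intro prime_elem_multiplicity_power_distrib) simp_all
  moreover have "multiplicity p (p ^ (2*k+1) * (8 * m + p)) = 2*k+1"
  proof -
    have "multiplicity p (p ^ (2*k+1) * (8 * m + p)) = multiplicity p (p ^ (2*k+1)) + multiplicity p (8 * m + p)"
      using pe assms(1) by (intro prime_elem_multiplicity_mult_distrib) (simp_all add: prime_gt_0_nat)
    also have "multiplicity p (p ^ (2*k+1)) = 2*k+1"
      using assms(1,2) by (intro multiplicity_same_power) (auto simp: prime_gt_0_nat)
    also have "multiplicity p (8 * m + p) = 0" using nd by (rule not_dvd_imp_multiplicity_0)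
    finally show ?thesis by simp
  qed
  ultimately have "2 * multiplicity p (2 * j + 1) = 2 * k + 1" using eq by metis
  then show False by presburger
qed


lemma r1: fixes a b w :: "'a::comm_ring_1"
  shows "((a + b) * w)^4 = w^4 * (a^4 + 6 * a^2 * b^2 + b^4) + 4 * (w^4 * a * b * (a^2 + b^2))"
  by (simp add: power2_eq_square power4_eq_xxxx algebra_simps)
lemma r2: fixes a b :: "'a::comm_ring_1"
  shows "b * a^4 * b^6 = a^3 * b^3 * a * b^4"
  by (simp add: eval_nat_numeral algebra_simps)
lemma r3: fixes i a c b d X :: "'a::comm_ring_1"
  assumes "i * d = 1"
  shows "i * a * (X * c) * (b + X^2 * d) = X * (i * a * c * b) + X^3 * (a * c)"
proof -
  have "i * a * (X * c) * (b + X^2 * d) = X * (i * a * c * b) + X^3 * (a * c) * (i * d)"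
    by (simp add: power2_eq_square power3_eq_cube algebra_simps)
  then show ?thesis using assms by simp
qed

lemma r4: fixes a :: "'a::comm_ring_1" shows "(a^2)^2 = a^3 * a"
  by (simp add: eval_nat_numeral algebra_simps)

lemma inverse_power_fps: "inverse (a ^ k :: rat fps) = inverse a ^ k"
  by (induction k) (simp_all add: fps_inverse_mult)

lemma dilE_int[simp]: "r > 0 \<Longrightarrow> isint (dil r E)" by simp
lemma dil_psi0: "dil r psi $ 0 = 1" by simp

definition Ar :: "rat fps" where "Ar = dil 3 E * dil 4 E * inverse (E * dil 12 E)"
definition DD :: "rat fps" where "DD = psi * dil 3 psi"
definition W :: "rat fps" where "W = inverse (dil 6 psi)"
definition RR :: "rat fps" where "RR = dil 4 psi + fps_X * dil 12 psi"

lemma isint_W: "isint W" unfolding W_def by (rule isint_inverse) simp_all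
lemma isint_DD: "isint DD" unfolding DD_def by simp
lemma isint_Ar: "isint Ar" unfolding Ar_def by (simp add: isint_inverse)

lemma psi_E3: "fcong 2 psi (E ^ 3)"
proof -
  have "fcong 2 ((dil 2 E)^2) ((E^2)^2)"
    by (rule fcong_power[OF fcong_sym[OF frob[OF isint_E]]])
  moreover have "(dil 2 E)^2 = psi * E" by (rule gauss[symmetric])
  moreover have "(E^2)^2 = E^3 * E" by (rule r4)
  ultimately have "fcong 2 (psi * E) (E^3 * E)" by (simp only:)
  then show ?thesis by (rule fcong_cancel) simp_all
qed

lemma A_cong: "fcong 2 Ar (DD * W)"
proof -
  have c: "fcong 2 (dil 3 psi) ((dil 3 E)^3)"
    using fcong_dil[OF _ psi_E3, of 3] by (simp add: dil_power)
  have d: "fcong 2 (dil 6 psi) ((dil 3 E)^6)"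
  proof -
    have "fcong 2 (dil 2 (dil 3 psi)) ((dil 3 psi)^2)" by (rule fcong_sym[OF frob]) simp
    moreover have "fcong 2 ((dil 3 psi)^2) (((dil 3 E)^3)^2)" by (rule fcong_power[OF c])
    ultimately have "fcong 2 (dil 2 (dil 3 psi)) (((dil 3 E)^3)^2)" by (rule fcong_trans)
    then show ?thesis by (simp add: dil_dil flip: power_mult)
  qed
  have e: "fcong 2 (dil 4 E) (E^4)" by (rule fcong_sym[OF frob4[OF isint_E]])
  have f: "fcong 2 (dil 12 E) ((dil 3 E)^4)"
    using fcong_sym[OF frob4[of "dil 3 E"]] by (simp add: dil_dil)
  define u where "u = E * dil 12 E * dil 6 psi"
  have u0: "u $ 0 = 1" "isint u" unfolding u_def by simp_all
  have inv1: "inverse (E * dil 12 E) * (E * dil 12 E) = 1" by (simp add: inverse_mult_eq_1)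
  have inv2: "W * dil 6 psi = 1" unfolding W_def by (simp add: inverse_mult_eq_1)
  have "Ar * u = dil 3 E * dil 4 E * dil 6 psi * (inverse (E * dil 12 E) * (E * dil 12 E))"
    unfolding Ar_def u_def by (simp only: ac_simps)
  then have Au: "Ar * u = dil 3 E * dil 4 E * dil 6 psi" using inv1 by simp
  have "DD * W * u = psi * dil 3 psi * E * dil 12 E * (W * dil 6 psi)"
    unfolding DD_def u_def by (simp only: ac_simps)
  then have Du: "DD * W * u = psi * dil 3 psi * E * dil 12 E" using inv2 by simp
  have i3: "isint (dil 3 E)" by simp
  have l: "fcong 2 (dil 3 E * dil 4 E * dil 6 psi) (dil 3 E * E^4 * (dil 3 E)^6)"
    by (rule fcong_mult[OF fcong_mult[OF fcong_refl[OF i3] e] d])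
  have r: "fcong 2 (psi * dil 3 psi * E * dil 12 E) (E^3 * (dil 3 E)^3 * E * (dil 3 E)^4)"
    by (rule fcong_mult[OF fcong_mult[OF fcong_mult[OF psi_E3 c] fcong_refl[OF isint_E]] f])
  have eq: "dil 3 E * E^4 * (dil 3 E)^6 = E^3 * (dil 3 E)^3 * E * (dil 3 E)^4" by (rule r2)
  have cg: "fcong 2 (Ar * u) (DD * W * u)" unfolding Au Du
    by (rule fcong_trans[OF l]) (unfold eq, rule fcong_sym[OF r])
  have iDW: "isint (DD * W)" using isint_DD isint_W by simp
  show ?thesis by (rule fcong_cancel[OF cg isint_Ar iDW u0(2) u0(1)])
qed


definition De :: "rat fps" where "De = evpart DD"
definition Do :: "rat fps" where "Do = odpart DD"
definition V :: "rat fps" where "V = W^4 * De * Do * (De^2 + Do^2)"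
definition Z :: "rat fps" where "Z = inverse (dil 6 psi) * psi * dil 3 psi * dil 2 psi"
definition Y :: "rat fps" where "Y = fps_X * dil 4 Z + fps_X^3 * dil 4 DD"

lemma evp_W: "evp W"
proof -
  have e: "W = dil 2 (inverse (dil 3 psi))" unfolding W_def by (simp add: dil_inverse dil_dil)
  show ?thesis unfolding e by (rule evp_dil2)
qed

lemma evp_De: "evp De" unfolding De_def by (rule evp_evpart)
lemma odp_Do: "odp Do" unfolding Do_def by (rule odp_odpart)
lemma isint_De: "isint De" unfolding De_def by (rule isint_evpart[OF isint_DD])
lemma isint_Do: "isint Do" unfolding Do_def by (rule isint_odpart[OF isint_DD])

lemma odd_coeff:
  assumes "odd n"
  shows "((DD * W)^4) $ n = 4 * V $ n"
proof -
  have sp: "DD = De + Do" unfolding De_def Do_def by (rule evod_split)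
  have eq: "(DD * W)^4 = W^4 * (De^4 + 6 * De^2 * Do^2 + Do^4) + 4 * V"
    unfolding sp V_def by (rule r1)
  have d2: "evp (Do^2)" unfolding power2_eq_square by (rule odp_mult[OF odp_Do odp_Do])
  have d4: "Do^4 = (Do^2)^2" by (simp flip: power_mult)
  have "evp (W^4 * (De^4 + 6 * De^2 * Do^2 + Do^4))"
    unfolding d4
    by (intro evp_mult evp_power evp_W evp_add evp_De d2 evp_numeral)
  then have "(W^4 * (De^4 + 6 * De^2 * Do^2 + Do^4)) $ n = 0" using assms by (simp add: evp_def)
  then show ?thesis unfolding eq by (simp add: numeral_fps_const)
qed

lemma evpart_sum: "evp a \<Longrightarrow> odp b \<Longrightarrow> evpart (a + b) = a"
  by (auto simp: fps_eq_iff evpart_def evp_def odp_def)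
lemma odpart_sum: "evp a \<Longrightarrow> odp b \<Longrightarrow> odpart (a + b) = b"
  by (auto simp: fps_eq_iff odpart_def evp_def odp_def)
lemma odp_X: assumes "evp b" shows "odp (fps_X * b)"
  unfolding odp_def
proof (intro allI impI)
  fix n :: nat assume "even n"
  then show "(fps_X * b) $ n = 0" using assms by (cases n) (auto simp: evp_def)
qed

lemma evp_dil4: "evp (dil 4 a)"
proof -
  have "dil 4 a = dil 2 (dil 2 a)" by (simp add: dil_dil)
  then show ?thesis by (simp add: evp_dil2)
qed
lemma evp_dil12: "evp (dil 12 a)"
proof -
  have "dil 12 a = dil 2 (dil 6 a)" by (simp add: dil_dil)
  then show ?thesis by (simp add: evp_dil2)
qed

lemma D_cong': "fcong 2 DD RR" unfolding DD_def RR_def by (rule D_cong)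

lemma hDe: "fcong 2 De (dil 4 psi)"
proof -
  have "evpart RR = dil 4 psi" unfolding RR_def by (rule evpart_sum[OF evp_dil4 odp_X[OF evp_dil12]])
  then show ?thesis using fcong_evpart[OF D_cong'] unfolding De_def by simp
qed
lemma hDo: "fcong 2 Do (fps_X * dil 12 psi)"
proof -
  have "odpart RR = fps_X * dil 12 psi" unfolding RR_def by (rule odpart_sum[OF evp_dil4 odp_X[OF evp_dil12]])
  then show ?thesis using fcong_odpart[OF D_cong'] unfolding Do_def by simp
qed

lemma dil2_RR: "dil 2 RR = dil 8 psi + fps_X^2 * dil 24 psi"
  unfolding RR_def by (simp add: dil_add dil_mult dil_X dil_dil)

lemma hS: "fcong 2 (De^2 + Do^2) (dil 8 psi + fps_X^2 * dil 24 psi)"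
proof -
  have sp: "DD = De + Do" unfolding De_def Do_def by (rule evod_split)
  have "DD^2 = (De^2 + Do^2) + 2 * (De * Do)" unfolding sp by (simp add: power2_eq_square algebra_simps)
  then have "fcong 2 (DD^2) (De^2 + Do^2)" unfolding fcong_const2
    using isint_De isint_Do isint_DD by (intro conjI exI[of _ "De * Do"]) simp_all
  then have "fcong 2 (De^2 + Do^2) (DD^2)" by (rule fcong_sym)
  moreover have "fcong 2 (DD^2) (dil 2 DD)" by (rule frob[OF isint_DD])
  moreover have "fcong 2 (dil 2 DD) (dil 2 RR)" by (rule fcong_dil[OF _ D_cong']) simp
  ultimately show ?thesis unfolding dil2_RR using fcong_trans by blast
qed

lemma hW: "fcong 2 (W^4) (inverse (dil 24 psi))"
proof -
  have "dil 4 W = inverse (dil 24 psi)" unfolding W_def by (simp add: dil_inverse dil_dil)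
  then show ?thesis using frob4[OF isint_W] by simp
qed

lemma V_cong: "fcong 2 V Y"
proof -
  have "fcong 2 V (inverse (dil 24 psi) * dil 4 psi * (fps_X * dil 12 psi) * (dil 8 psi + fps_X^2 * dil 24 psi))"
    unfolding V_def by (rule fcong_mult[OF fcong_mult[OF fcong_mult[OF hW hDe] hDo] hS])
  moreover have "inverse (dil 24 psi) * dil 4 psi * (fps_X * dil 12 psi) * (dil 8 psi + fps_X^2 * dil 24 psi)
      = fps_X * (inverse (dil 24 psi) * dil 4 psi * dil 12 psi * dil 8 psi) + fps_X^3 * (dil 4 psi * dil 12 psi)"
    by (rule r3) (simp add: inverse_mult_eq_1)
  moreover have "dil 4 Z = inverse (dil 24 psi) * dil 4 psi * dil 12 psi * dil 8 psi"
    unfolding Z_def by (simp add: dil_mult dil_inverse dil_dil)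
  moreover have "dil 4 DD = dil 4 psi * dil 12 psi"
    unfolding DD_def by (simp add: dil_mult dil_dil)
  ultimately show ?thesis unfolding Y_def by simp
qed

lemma Y_coeff: "Y $ (4 * t + 3) = DD $ t"
proof -
  have "(fps_X * dil 4 Z) $ (4 * t + 3) = dil 4 Z $ (4 * t + 2)" by simp
  also have "\<dots> = 0"
  proof -
    have "\<not> 4 dvd (4 * t + 2)" by presburger
    then show ?thesis by (simp add: dil_nth)
  qed
  finally have a: "(fps_X * dil 4 Z) $ (4 * t + 3) = 0" .
  have b: "(fps_X^3 * dil 4 DD) $ (4 * t + 3) = DD $ t"
    by (simp add: fps_X_power_mult_nth dil_nth)
  show ?thesis unfolding Y_def using a b by simp
qed

lemma RR_coeff1: "RR $ (4 * M) = psi $ M"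
proof -
  have "(fps_X * dil 12 psi) $ (4 * M) = 0"
  proof (cases M)
    case (Suc M')
    have "\<not> 12 dvd (4 * M - 1)" using Suc by presburger
    then show ?thesis using Suc by (simp add: dil_nth)
  qed simp
  then show ?thesis unfolding RR_def by (simp add: dil_nth)
qed

lemma RR_coeff2: "RR $ (12 * M + 1) = psi $ M"
proof -
  have "\<not> 4 dvd (12 * M + 1)" by presburger
  then have "dil 4 psi $ (12 * M + 1) = 0" by (simp add: dil_nth)
  moreover have "(fps_X * dil 12 psi) $ (12 * M + 1) = psi $ M" by (simp add: dil_nth)
  ultimately show ?thesis unfolding RR_def by simp
qed

lemma key:
  assumes "psi $ M = 0" "t = 4 * M \<or> t = 12 * M + 1"
  shows "(Ar^4) $ (4 * t + 3) / 8 \<in> \<int>"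
proof -
  define n where "n = 4 * t + 3"
  have on: "odd n" unfolding n_def by simp
  have c1: "((Ar^4) $ n - ((DD * W)^4) $ n) / 8 \<in> \<int>"
    by (rule fcong_coeff[OF fcong_pow4[OF A_cong]]) simp
  have c2: "(V $ n - Y $ n) / 2 \<in> \<int>" by (rule fcong_coeff[OF V_cong]) simp
  have c3: "(DD $ t - RR $ t) / 2 \<in> \<int>" by (rule fcong_coeff[OF D_cong']) simp
  have e1: "((DD * W)^4) $ n = 4 * V $ n" by (rule odd_coeff[OF on])
  have e2: "Y $ n = DD $ t" unfolding n_def by (rule Y_coeff)
  have e3: "RR $ t = 0" using assms RR_coeff1 RR_coeff2 by auto
  have "(Ar^4) $ n / 8 = ((Ar^4) $ n - ((DD * W)^4) $ n) / 8 + (V $ n - Y $ n) / 2 + (DD $ t - RR $ t) / 2"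
    unfolding e1 e2 e3 by (simp add: field_simps)
  also have "\<dots> \<in> \<int>" using c1 c2 c3 by (intro Ints_add)
  finally show ?thesis unfolding n_def .
qed


lemma ftrunc0: "r > 0 \<Longrightarrow> f_trunc N r $ 0 = 1"
proof -
  assume r: "r > 0"
  have "f_trunc N r = dil r (poch N)" using ftrunc_dil[OF r, of N] by (simp add: poch_ftrunc)
  then show ?thesis by simp
qed

lemma Ar4: "Ar^4 = (dil 3 E)^4 * (dil 4 E)^4 * inverse (E^4 * (dil 12 E)^4)"
proof -
  have "Ar^4 = (dil 3 E)^4 * (dil 4 E)^4 * inverse (E * dil 12 E) ^ 4"
    unfolding Ar_def by (simp only: power_mult_distrib)
  also have "inverse (E * dil 12 E) ^ 4 = inverse ((E * dil 12 E)^4)" by (rule inverse_power_fps[symmetric])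
  also have "(E * dil 12 E)^4 = E^4 * (dil 12 E)^4" by (rule power_mult_distrib)
  finally show ?thesis .
qed

lemma b434_eq: "b434 n = \<lfloor>(Ar^4) $ n\<rfloor>"
proof -
  let ?num = "(f_trunc n 3)^4 * (f_trunc n 4)^4"
  let ?den = "(f_trunc n 1)^4 * (f_trunc n 12)^4"
  have den0: "?den $ 0 \<noteq> 0" by (simp add: ftrunc0)
  have den0': "(E^4 * (dil 12 E)^4) $ 0 \<noteq> 0" by simp
  have q: "?num / ?den = ?num * inverse ?den" by (rule fps_divide_unit[OF den0])
  have e1: "eqm (n+1) ?num ((dil 3 E)^4 * (dil 4 E)^4)"
    by (intro eqm_mult eqm_power Er_eqm) simp_all
  have e2: "eqm (n+1) ?den (E^4 * (dil 12 E)^4)"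
    by (intro eqm_mult eqm_power Er_eqm E_eqm) simp
  have e3: "eqm (n+1) (inverse ?den) (inverse (E^4 * (dil 12 E)^4))"
    by (rule eqm_inverse[OF e2 den0 den0'])
  have "eqm (n+1) (?num * inverse ?den) (Ar^4)" unfolding Ar4 by (rule eqm_mult[OF e1 e3])
  then have "(?num / ?den) $ n = (Ar^4) $ n" unfolding q eqm_def by simp
  then show ?thesis unfolding b434_def by simp
qed

lemma b434_mod8:
  assumes "psi $ M = 0" "t = 4 * M \<or> t = 12 * M + 1"
  shows "[b434 (4 * t + 3) = 0] (mod 8)"
proof -
  have "isint (Ar^4)" using isint_Ar by simp
  then have i: "(Ar^4) $ (4 * t + 3) \<in> \<int>" by (simp add: isint_def)
  then obtain z where z: "(Ar^4) $ (4 * t + 3) = of_int z" by (auto elim: Ints_cases)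
  have "(of_int z :: rat) / 8 \<in> \<int>" using key[OF assms] z by simp
  then obtain w where "(of_int z :: rat) / 8 = of_int w" by (auto elim: Ints_cases)
  then have "(of_int z :: rat) = of_int (8 * w)" by (simp add: field_simps)
  then have "z = 8 * w" by (simp only: of_int_eq_iff)
  then have "8 dvd z" by simp
  moreover have "b434 (4 * t + 3) = z" unfolding b434_eq z by simp
  ultimately show ?thesis by (simp add: cong_0_iff)
qed

theorem mainTheorem20:
  fixes p k m :: nat
  assumes "prime p" and "p \<ge> 5" and "Legendre (-2) (int p) = -1" and "\<not> p dvd m"
  shows "[b434 (16 * p ^ (2*k+1) * m + 2 * p ^ (2*k+2) + 1) = 0] (mod 8)
       \<and> [b434 (48 * p ^ (2*k+1) * m + 6 * p ^ (2*k+2) + 1) = 0] (mod 8)"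
proof -
  define M where "M = p ^ (2*k+1) * m + (p ^ (2*k+2) - 1) div 8"
  have psiM: "psi $ M = 0"
    using not_tri[OF assms(1,2,4), of k] unfolding M_def psi_def by auto
  have pf: "8 dvd p ^ (2*k+2) - 1" "p ^ (2*k+2) \<ge> 1"
    using p_facts(3,4)[OF assms(1,2), of k] by auto
  define B where "B = p ^ (2*k+2)"
  define A where "A = p ^ (2*k+1)"
  have d8: "8 * ((B - 1) div 8) + 1 = B" using pf unfolding B_def by simp
  have n1: "4 * (4 * M) + 3 = 16 * A * m + 2 * B + 1"
  proof -
    have "4 * (4 * M) + 3 = 16 * A * m + 2 * (8 * ((B - 1) div 8) + 1) + 1"
      unfolding M_def A_def B_def by simp
    then show ?thesis unfolding d8 .
  qed
  have n2: "4 * (12 * M + 1) + 3 = 48 * A * m + 6 * B + 1"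
  proof -
    have "4 * (12 * M + 1) + 3 = 48 * A * m + 6 * (8 * ((B - 1) div 8) + 1) + 1"
      unfolding M_def A_def B_def by simp
    then show ?thesis unfolding d8 .
  qed
  have r1: "[b434 (4 * (4 * M) + 3) = 0] (mod 8)" by (rule b434_mod8[OF psiM]) simp
  have r2: "[b434 (4 * (12 * M + 1) + 3) = 0] (mod 8)" by (rule b434_mod8[OF psiM]) simp
  show ?thesis using r1 r2 unfolding n1 n2 A_def B_def by simp
qed


end
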